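(* Let $H_A,H_B$ be finite-dimensional Hilbert spaces and let $|\Psi\rangle\in H_A\otimes H_B$ be a unit vector with Schmidt decomposition $|\Psi\rangle=\sum_i a_i|e_i\rangle|f_i\rangle$, where $\{|e_i\rangle\}$, $\{|f_i\rangle\}$ are orthonormal, and the Schmidt coefficients are ordered decreasingly $a_1\ge a_2\ge\cdots\ge0$ (with $a_2=0$ if the Schmidt rank is $1$). Then $E_W(|\Psi\rangle\langle\Psi|)=a_1a_2$.
   Context: A density operator on $H_A\otimes H_B$ is separable if it is a convex combination of product states $\sigma_A\otimes\sigma_B$. An entanglement witness (EW) is a Hermitian operator $W$ on $H_A\otimes H_B$ with $\mathrm{Tr}(W\sigma)\ge0$ for every separable $\sigma$; only normalized witnesses, $\mathrm{Tr}(W)=1$, are considered. An optimal entanglement witness $W_\rho$ for $\rho$ minimizes $\mathrm{Tr}(W\rho)$ over all normalized EWs. The witnessed entanglement is $E_W(\rho)=\max\{0,-\mathrm{Tr}(W_\rho\rho)\}$. *)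

theory Defs
  imports "Jordan_Normal_Form.Matrix" "Jordan_Normal_Form.Schur_Decomposition"
begin

text \<open>Finite-dimensional Hilbert spaces H_A = C^m, H_B = C^n; H_A (x) H_B = C^(m*n),
  with the tensor product realised as the Kronecker product.\<close>

definition kron_vec :: "complex vec \<Rightarrow> complex vec \<Rightarrow> complex vec" where
  "kron_vec u v = vec (dim_vec u * dim_vec v)
     (\<lambda>t. u $ (t div dim_vec v) * v $ (t mod dim_vec v))"

definition kron_mat :: "complex mat \<Rightarrow> complex mat \<Rightarrow> complex mat" where
  "kron_mat A B = mat (dim_row A * dim_row B) (dim_col A * dim_col B)
     (\<lambda>(i, j). A $$ (i div dim_row B, j div dim_col B) * B $$ (i mod dim_row B, j mod dim_col B))"

definition mtrace :: "complex mat \<Rightarrow> complex" where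
  "mtrace A = (\<Sum>i<dim_row A. A $$ (i, i))"

definition hermitian :: "nat \<Rightarrow> complex mat \<Rightarrow> bool" where
  "hermitian d A \<longleftrightarrow> A \<in> carrier_mat d d \<and> mat_adjoint A = A"

definition psd :: "nat \<Rightarrow> complex mat \<Rightarrow> bool" where
  "psd d A \<longleftrightarrow> hermitian d A \<and> (\<forall>v \<in> carrier_vec d. 0 \<le> Re ((A *\<^sub>v v) \<bullet>c v))"

definition density_op :: "nat \<Rightarrow> complex mat \<Rightarrow> bool" where
  "density_op d \<rho> \<longleftrightarrow> psd d \<rho> \<and> mtrace \<rho> = 1"

definition separable :: "nat \<Rightarrow> nat \<Rightarrow> complex mat \<Rightarrow> bool" where
  "separable m n \<sigma> \<longleftrightarrow>
     (\<exists>K (p :: nat \<Rightarrow> real) \<sigma>A \<sigma>B.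
        (\<forall>l<K. 0 \<le> p l \<and> density_op m (\<sigma>A l) \<and> density_op n (\<sigma>B l)) \<and>
        (\<Sum>l<K. p l) = 1 \<and>
        \<sigma> = mat (m * n) (m * n)
              (\<lambda>(i, j). \<Sum>l<K. complex_of_real (p l) * kron_mat (\<sigma>A l) (\<sigma>B l) $$ (i, j)))"

definition ent_witness :: "nat \<Rightarrow> nat \<Rightarrow> complex mat \<Rightarrow> bool" where
  "ent_witness m n W \<longleftrightarrow> hermitian (m * n) W \<and>
     (\<forall>\<sigma>. separable m n \<sigma> \<longrightarrow> 0 \<le> Re (mtrace (W * \<sigma>)))"

definition normalized_EW :: "nat \<Rightarrow> nat \<Rightarrow> complex mat \<Rightarrow> bool" where
  "normalized_EW m n W \<longleftrightarrow> ent_witness m n W \<and> mtrace W = 1"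

text \<open>Witnessed entanglement: E_W(rho) = max 0 (- Tr(W_rho rho)), where W_rho minimises
  Tr(W rho) over normalised witnesses; the minimal value is written as an infimum.\<close>
definition witnessed_ent :: "nat \<Rightarrow> nat \<Rightarrow> complex mat \<Rightarrow> real" where
  "witnessed_ent m n \<rho> =
     max 0 (- (INF W \<in> {W. normalized_EW m n W}. Re (mtrace (W * \<rho>))))"

definition proj :: "complex vec \<Rightarrow> complex mat" where
  "proj \<psi> = mat (dim_vec \<psi>) (dim_vec \<psi>) (\<lambda>(i, j). \<psi> $ i * cnj (\<psi> $ j))"

end

theory Submission
  imports Defs
begin

definition om :: "nat \<Rightarrow> int \<Rightarrow> complex" where
  "om N d = cis (2 * pi * of_int d / real N)"

lemma om_add: "om N a * om N b = om N (a + b)"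
  unfolding om_def cis_mult by (simp add: add_divide_distrib distrib_left)

lemma om_pow: "om N d ^ r = om N (int r * d)"
  unfolding om_def DeMoivre by (simp add: algebra_simps)

lemma rou_sum:
  assumes N: "N > 0"
  shows "(\<Sum>r<N. om N (int r * d)) = (if int N dvd d then of_nat N else 0)"
proof (cases "int N dvd d")
  case True
  then obtain q where q: "d = int N * q" by blast
  have "om N (int r * d) = 1" for r
  proof -
    have "2 * pi * of_int (int r * d) / real N = 2 * pi * of_int (int r * q)"
      using N by (simp add: q field_simps)
    thus ?thesis unfolding om_def by simp
  qed
  thus ?thesis using True by simp
next
  case False
  have ne: "om N d \<noteq> 1"
  proof
    assume "om N d = 1"
    hence "cos (2 * pi * of_int d / real N) = 1" unfolding om_def
      by (metis cis.sel(1) one_complex.sel(1))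
    then obtain z :: int where z: "2 * pi * of_int d / real N = of_int z * 2 * pi"
      using cos_one_2pi_int by blast
    hence "of_int d = of_int z * real N" using N by (simp add: field_simps)
    hence "d = z * int N" by (metis of_int_eq_iff of_int_mult of_int_of_nat_eq)
    thus False using False by simp
  qed
  have "om N d ^ N = 1"
  proof -
    have "om N d ^ N = om N (int N * d)" by (rule om_pow)
    also have "\<dots> = cis (2 * pi * of_int d)"
    proof -
      have "2 * pi * of_int (int N * d) / real N = 2 * pi * of_int d" using N by simp
      thus ?thesis unfolding om_def by (simp only:)
    qed
    also have "\<dots> = 1" by (rule cis_multiple_2pi) simp
    finally show ?thesis .
  qed
  hence "(\<Sum>r<N. om N d ^ r) = 0" using geometric_sum[OF ne, of N] by simp
  thus ?thesis using False by (simp add: om_pow)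
qed

lemma pow2_sorted:
  fixes a b c d :: nat
  assumes "a \<le> b" "c \<le> d" "(2::nat)^a + 2^b = 2^c + 2^d"
  shows "a = c \<and> b = d"
  using assms
proof (induction a arbitrary: b c d)
  case 0
  show ?case
  proof (cases c)
    case 0
    then show ?thesis using "0.prems" by simp
  next
    case (Suc c')
    then obtain d' where d: "d = Suc d'" using "0.prems" by (cases d) auto
    have "even ((2::nat)^c + 2^d)" using Suc d by simp
    hence "even ((1::nat) + 2^b)" using "0.prems" by simp
    hence ev: "even ((1::nat) + 2^b)" .
    have "b = 0"
    proof (rule ccontr)
      assume "b \<noteq> 0" hence "even ((2::nat)^b)" by simp
      with ev show False by simp
    qed
    hence "(2::nat) = 2^c + 2^d" using "0.prems" by simp
    moreover have "(2::nat)^c \<ge> 2" "(2::nat)^d \<ge> 2" using Suc d by simp_all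
    ultimately show ?thesis by simp
  qed
next
  case (Suc a)
  show ?case
  proof (cases c)
    case 0
    obtain b' where b: "b = Suc b'" using Suc.prems by (cases b) auto
    have "even ((2::nat)^Suc a + 2^b)" using b by simp
    hence "even ((1::nat) + 2^d)" using Suc.prems(3) 0 by (metis power_0)
    hence ev: "even ((1::nat) + 2^d)" .
    have "d = 0"
    proof (rule ccontr)
      assume "d \<noteq> 0" hence "even ((2::nat)^d)" by simp
      with ev show False by simp
    qed
    hence "(2::nat) = 2^Suc a + 2^b" using Suc.prems 0 by simp
    moreover have "(2::nat)^Suc a \<ge> 2" "(2::nat)^b \<ge> 2" using b by simp_all
    ultimately show ?thesis by linarith
  next
    case (Suc c')
    obtain b' where b: "b = Suc b'" using Suc.prems by (cases b) auto
    obtain d' where d: "d = Suc d'" using Suc.prems Suc by (cases d) auto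
    have "(2::nat)^a + 2^b' = 2^c' + 2^d'" using Suc.prems b d Suc by simp
    hence "a = c' \<and> b' = d'" using Suc.IH[of b' c' d'] Suc.prems b d Suc by simp
    thus ?thesis using b d Suc by simp
  qed
qed

lemma pow2_sidon:
  fixes i j k l :: nat
  assumes "(2::nat)^i + 2^l = 2^k + 2^j"
  shows "(i = k \<and> l = j) \<or> (i = j \<and> l = k)"
proof -
  have e1: "(2::nat)^l + 2^i = 2^k + 2^j" "(2::nat)^i + 2^l = 2^j + 2^k" "(2::nat)^l + 2^i = 2^j + 2^k"
    using assms by (simp_all add: add.commute)
  consider "i \<le> l" "k \<le> j" | "i \<le> l" "j \<le> k" | "l \<le> i" "k \<le> j" | "l \<le> i" "j \<le> k"
    by linarith
  thus ?thesis
  proof cases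
    case 1 thus ?thesis using pow2_sorted[of i l k j] assms by blast
  next
    case 2 thus ?thesis using pow2_sorted[of i l j k] e1 by blast
  next
    case 3 thus ?thesis using pow2_sorted[of l i k j] e1 by blast
  next
    case 4 thus ?thesis using pow2_sorted[of l i j k] e1 by blast
  qed
qed

lemma if_conj0: "(if A \<and> B then x else (0::'a::zero)) = (if A then (if B then x else 0) else 0)" by simp

lemma sum_if_const: "(\<Sum>x\<in>S. if P then f x else (0::'a::comm_monoid_add)) = (if P then (\<Sum>x\<in>S. f x) else 0)"
  by simp

lemma delta4a: fixes K :: nat shows "(\<Sum>i<K. \<Sum>i'<K. \<Sum>j<K. \<Sum>l<K. if i = i' \<and> j = l then T i i' j l else (0::complex)) = (\<Sum>i<K. \<Sum>j<K. T i i j j)"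
  by (simp add: if_conj0 sum_if_const)

lemma delta4b: fixes K :: nat shows "(\<Sum>i<K. \<Sum>i'<K. \<Sum>j<K. \<Sum>l<K. if i = j \<and> i' = l then T i i' j l else (0::complex)) = (\<Sum>i<K. \<Sum>i'<K. T i i' i i')"
  apply (subst (2) sum.swap) 
  by (simp add: if_conj0 sum_if_const)

lemma delta4c: fixes K :: nat shows "(\<Sum>i<K. \<Sum>i'<K. \<Sum>j<K. \<Sum>l<K. if i = i' \<and> j = l \<and> i = j then T i i' j l else (0::complex)) = (\<Sum>i<K. T i i i i)"
  by (simp add: if_conj0 sum_if_const)

lemma prod4_sum:
  fixes A B C D :: "nat \<Rightarrow> complex" and K :: nat
  shows "(\<Sum>i<K. A i) * (\<Sum>i<K. B i) * (\<Sum>i<K. C i) * (\<Sum>i<K. D i) =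
    (\<Sum>i<K. \<Sum>i'<K. \<Sum>j<K. \<Sum>l<K. A i * B i' * C j * D l)"
proof -
  have "(\<Sum>i<K. \<Sum>i'<K. \<Sum>j<K. \<Sum>l<K. A i * B i' * C j * D l)
      = (\<Sum>i<K. A i * (\<Sum>i'<K. B i' * (\<Sum>j<K. C j * (\<Sum>l<K. D l))))"
    by (simp add: sum_distrib_left mult.assoc)
  also have "\<dots> = (\<Sum>i<K. A i) * ((\<Sum>i<K. B i) * ((\<Sum>i<K. C i) * (\<Sum>i<K. D i)))"
    by (simp add: sum_distrib_right)
  finally show ?thesis by (simp add: mult.assoc)
qed

lemma om4: "om N a * om N b * om N c * om N d = om N (a + b + c + d)"
  by (simp add: om_add)

lemma twirl:
  fixes c E1 E2 F1 F2 :: "nat \<Rightarrow> complex" and K :: nat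
  defines "N \<equiv> (2::nat)^(K+2)" and "p \<equiv> \<lambda>i::nat. (2::int)^i"
  shows "(\<Sum>r<N. (\<Sum>i<K. c i * om N (int r * p i) * E1 i) * (\<Sum>i<K. c i * om N (- (int r * p i)) * E2 i)
             * (\<Sum>i<K. c i * om N (- (int r * p i)) * F1 i) * (\<Sum>i<K. c i * om N (int r * p i) * F2 i))
   = of_nat N * ((\<Sum>i<K. c i^2 * E1 i * F1 i) * (\<Sum>i<K. c i^2 * E2 i * F2 i)
       + (\<Sum>i<K. \<Sum>j<K. c i^2 * c j^2 * E1 i * E2 i * F1 j * F2 j)
       - (\<Sum>i<K. c i^4 * E1 i * E2 i * F1 i * F2 i))"
proof -
  define T where "T i i' j l = c i * c i' * c j * c l * E1 i * E2 i' * F1 j * F2 l" for i i' j l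
  define d where "d i i' j l = p i - p i' - p j + p l" for i i' j l
  have Npos: "N > 0" unfolding N_def by simp
  have step1: "(\<Sum>i<K. c i * om N (int r * p i) * E1 i) * (\<Sum>i<K. c i * om N (- (int r * p i)) * E2 i)
             * (\<Sum>i<K. c i * om N (- (int r * p i)) * F1 i) * (\<Sum>i<K. c i * om N (int r * p i) * F2 i)
      = (\<Sum>i<K. \<Sum>i'<K. \<Sum>j<K. \<Sum>l<K. T i i' j l * om N (int r * d i i' j l))" for r
  proof -
    have t: "(c i * om N (int r * p i) * E1 i) * (c i' * om N (- (int r * p i')) * E2 i')
             * (c j * om N (- (int r * p j)) * F1 j) * (c l * om N (int r * p l) * F2 l)
        = T i i' j l * om N (int r * d i i' j l)" for i i' j l
    proof -
      have "(c i * om N (int r * p i) * E1 i) * (c i' * om N (- (int r * p i')) * E2 i')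
             * (c j * om N (- (int r * p j)) * F1 j) * (c l * om N (int r * p l) * F2 l)
          = T i i' j l * (om N (int r * p i) * om N (- (int r * p i')) * om N (- (int r * p j)) * om N (int r * p l))"
        unfolding T_def by (simp add: mult_ac)
      also have "\<dots> = T i i' j l * om N (int r * d i i' j l)"
        unfolding om4 d_def by (simp add: algebra_simps)
      finally show ?thesis .
    qed
    show ?thesis unfolding prod4_sum t ..
  qed
  have step2: "(\<Sum>r<N. \<Sum>i<K. \<Sum>i'<K. \<Sum>j<K. \<Sum>l<K. T i i' j l * om N (int r * d i i' j l))
     = (\<Sum>i<K. \<Sum>i'<K. \<Sum>j<K. \<Sum>l<K. T i i' j l * (\<Sum>r<N. om N (int r * d i i' j l)))"
    by (simp add: sum_distrib_left sum.swap[of _ "{..<N}"])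
  have pbound: "0 < p i \<and> p i < 2^K" if "i < K" for i
    unfolding p_def using that by (simp add: power_strict_increasing)
  have step3: "(\<Sum>r<N. om N (int r * d i i' j l)) = (if (i = i' \<and> j = l) \<or> (i = j \<and> i' = l) then of_nat N else 0)"
    if "i < K" "i' < K" "j < K" "l < K" for i i' j l
  proof -
    have dvd_iff: "int N dvd d i i' j l \<longleftrightarrow> d i i' j l = 0"
    proof
      assume dv: "int N dvd d i i' j l"
      show "d i i' j l = 0"
      proof (rule ccontr)
        assume nz: "d i i' j l \<noteq> 0"
        have "\<bar>int N\<bar> \<le> \<bar>d i i' j l\<bar>" by (rule dvd_imp_le_int[OF nz dv])
        moreover have "\<bar>d i i' j l\<bar> < 2 * 2^K" unfolding d_def using pbound[OF that(1)] pbound[OF that(2)] pbound[OF that(3)] pbound[OF that(4)]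
          by (simp add: abs_less_iff)
        moreover have "int N = 4 * 2^K" unfolding N_def by simp
        ultimately show False by simp
      qed
    qed simp
    have d0: "d i i' j l = 0 \<longleftrightarrow> (i = i' \<and> j = l) \<or> (i = j \<and> i' = l)"
    proof
      assume "d i i' j l = 0"
      hence "(2::int)^i + 2^l = 2^i' + 2^j" unfolding d_def p_def by simp
      hence "int (2^i + 2^l) = int (2^i' + 2^j)" by simp
      hence "(2::nat)^i + 2^l = 2^i' + 2^j" by (simp only: of_nat_eq_iff)
      thus "(i = i' \<and> j = l) \<or> (i = j \<and> i' = l)" using pow2_sidon by blast
    next
      assume "(i = i' \<and> j = l) \<or> (i = j \<and> i' = l)"
      thus "d i i' j l = 0" unfolding d_def by auto
    qed
    show ?thesis using rou_sum[OF Npos, of "d i i' j l"] dvd_iff d0 by simp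
  qed
  have ind: "(if (i = i' \<and> j = l) \<or> (i = j \<and> i' = l) then x else 0) =
     (if i = i' \<and> j = l then x else 0) + (if i = j \<and> i' = l then x else 0) - (if i = i' \<and> j = l \<and> i = j then x else (0::complex))"
    for i i' j l :: nat and x by auto
  have "(\<Sum>r<N. (\<Sum>i<K. c i * om N (int r * p i) * E1 i) * (\<Sum>i<K. c i * om N (- (int r * p i)) * E2 i)
             * (\<Sum>i<K. c i * om N (- (int r * p i)) * F1 i) * (\<Sum>i<K. c i * om N (int r * p i) * F2 i))
      = (\<Sum>i<K. \<Sum>i'<K. \<Sum>j<K. \<Sum>l<K. T i i' j l * (\<Sum>r<N. om N (int r * d i i' j l)))"
    unfolding step1 step2 ..
  also have "\<dots> = (\<Sum>i<K. \<Sum>i'<K. \<Sum>j<K. \<Sum>l<K. if (i = i' \<and> j = l) \<or> (i = j \<and> i' = l) then of_nat N * T i i' j l else 0)"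
    by (intro sum.cong refl, simp add: step3)
  also have "\<dots> = (\<Sum>i<K. \<Sum>i'<K. \<Sum>j<K. \<Sum>l<K. if i = i' \<and> j = l then of_nat N * T i i' j l else 0)
     + (\<Sum>i<K. \<Sum>i'<K. \<Sum>j<K. \<Sum>l<K. if i = j \<and> i' = l then of_nat N * T i i' j l else 0)
     - (\<Sum>i<K. \<Sum>i'<K. \<Sum>j<K. \<Sum>l<K. if i = i' \<and> j = l \<and> i = j then of_nat N * T i i' j l else 0)"
    unfolding ind by (simp only: sum.distrib sum_subtractf)
  also have "\<dots> = (\<Sum>i<K. \<Sum>j<K. of_nat N * T i i j j) + (\<Sum>i<K. \<Sum>i'<K. of_nat N * T i i' i i')
      - (\<Sum>i<K. of_nat N * T i i i i)"
    unfolding delta4a delta4b delta4c ..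
  also have "\<dots> = of_nat N * ((\<Sum>i<K. c i^2 * E1 i * F1 i) * (\<Sum>i<K. c i^2 * E2 i * F2 i)
       + (\<Sum>i<K. \<Sum>j<K. c i^2 * c j^2 * E1 i * E2 i * F1 j * F2 j)
       - (\<Sum>i<K. c i^4 * E1 i * E2 i * F1 i * F2 i))"
    unfolding T_def sum_product
    by (simp add: sum_distrib_left algebra_simps power2_eq_square power4_eq_xxxx)
  finally show ?thesis .
qed

lemma sum_add_split:
  fixes g :: "nat \<Rightarrow> 'a::comm_monoid_add"
  shows "(\<Sum>p<a+n. g p) = (\<Sum>p<a. g p) + (\<Sum>t<n. g (a+t))"
  by (induction n) (simp_all add: add.assoc)

lemma sum_split:
  fixes g :: "nat \<Rightarrow> 'a::comm_monoid_add"
  shows "(\<Sum>p<m*n. g p) = (\<Sum>s<m. \<Sum>t<n. g (s*n+t))"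
proof (induction m)
  case 0 then show ?case by simp
next
  case (Suc m)
  have "(\<Sum>p<Suc m * n. g p) = (\<Sum>p<m*n + n. g p)" by (simp add: add.commute)
  also have "\<dots> = (\<Sum>p<m*n. g p) + (\<Sum>t<n. g (m*n+t))"
    by (rule sum_add_split)
  finally show ?case using Suc by simp
qed

lemma idx_lt: "s < m \<Longrightarrow> t < (n::nat) \<Longrightarrow> s*n+t < m*n"
proof -
  assume a: "s < m" "t < n"
  hence "s*n + t < s*n + n" by simp
  also have "\<dots> = (s+1)*n" by simp
  also have "\<dots> \<le> m*n" using a by (intro mult_right_mono) auto
  finally show ?thesis .
qed

lemma idx_div[simp]: "t < (n::nat) \<Longrightarrow> (s*n+t) div n = s" by simp
lemma idx_mod[simp]: "t < (n::nat) \<Longrightarrow> (s*n+t) mod n = t" by simp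

definition Hs :: "nat \<Rightarrow> nat \<Rightarrow> (nat \<Rightarrow> nat \<Rightarrow> complex) \<Rightarrow> (nat \<Rightarrow> nat \<Rightarrow> nat \<Rightarrow> nat \<Rightarrow> complex) \<Rightarrow> complex" where
  "Hs m n w X = (\<Sum>s<m. \<Sum>t<n. \<Sum>s'<m. \<Sum>t'<n. w (s*n+t) (s'*n+t') * X s t s' t')"

lemma mtrace_mult:
  assumes W: "W \<in> carrier_mat (m*n) (m*n)" and S: "S \<in> carrier_mat (m*n) (m*n)"
  shows "mtrace (W * S) = Hs m n (\<lambda>p q. W $$ (p,q)) (\<lambda>s t s' t'. S $$ (s'*n+t', s*n+t))"
proof -
  have "mtrace (W * S) = (\<Sum>p<m*n. \<Sum>q<m*n. W $$ (p,q) * S $$ (q,p))"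
    unfolding mtrace_def using W S
    by (auto simp: scalar_prod_def atLeast0LessThan intro!: sum.cong)
  also have "\<dots> = Hs m n (\<lambda>p q. W $$ (p,q)) (\<lambda>s t s' t'. S $$ (s'*n+t', s*n+t))"
    unfolding Hs_def sum_split ..
  finally show ?thesis .
qed

lemma kron_entry:
  assumes "A \<in> carrier_mat m m" "B \<in> carrier_mat n n" "s < m" "s' < m" "t < n" "t' < n"
  shows "kron_mat A B $$ (s'*n+t', s*n+t) = A $$ (s',s) * B $$ (t',t)"
  using assms idx_lt[of s' m t' n] idx_lt[of s m t n] unfolding kron_mat_def by simp

lemma Hs_sum: "Hs m n w (\<lambda>s t s' t'. \<Sum>i\<in>I. X i s t s' t') = (\<Sum>i\<in>I. Hs m n w (X i))"
  unfolding Hs_def by (simp add: sum_distrib_left sum.swap[of _ I])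

lemma Hs_scale: "Hs m n w (\<lambda>s t s' t'. c * X s t s' t') = c * Hs m n w X"
  unfolding Hs_def by (simp add: sum_distrib_left mult_ac)

lemma Hs_add: "Hs m n w (\<lambda>s t s' t'. X s t s' t' + Y s t s' t') = Hs m n w X + Hs m n w Y"
  unfolding Hs_def by (simp add: distrib_left sum.distrib)

lemma Hs_diff: "Hs m n w (\<lambda>s t s' t'. X s t s' t' - Y s t s' t') = Hs m n w X - Hs m n w Y"
  unfolding Hs_def by (simp add: right_diff_distrib sum_subtractf)

lemma Hs_cong: "(\<And>s t s' t'. s < m \<Longrightarrow> t < n \<Longrightarrow> s' < m \<Longrightarrow> t' < n \<Longrightarrow> X s t s' t' = Y s t s' t') \<Longrightarrow>
   Hs m n w X = Hs m n w Y"
  unfolding Hs_def by (intro sum.cong refl) auto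

lemma Hs_wcong: "(\<And>p q. p < m*n \<Longrightarrow> q < m*n \<Longrightarrow> w p q = w' p q) \<Longrightarrow> Hs m n w X = Hs m n w' X"
  unfolding Hs_def by (intro sum.cong refl) (auto simp: idx_lt)

lemma adj_index:
  assumes "i < dim_col A" "j < dim_row A"
  shows "mat_adjoint A $$ (i,j) = cnj (A $$ (j,i))"
  using assms unfolding mat_adjoint_def by (simp add: mat_of_rows_index)

lemma adj_dim: "dim_row (mat_adjoint A) = dim_col A" "dim_col (mat_adjoint A) = dim_row A"
  unfolding mat_adjoint_def by auto

lemma hermitianI:
  assumes "A \<in> carrier_mat d d" "\<And>i j. i < d \<Longrightarrow> j < d \<Longrightarrow> A $$ (j,i) = cnj (A $$ (i,j))"
  shows "hermitian d A"
  unfolding hermitian_def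
proof
  show "A \<in> carrier_mat d d" by fact
  show "mat_adjoint A = A"
  proof (rule eq_matI)
    fix i j assume ij: "i < dim_row A" "j < dim_col A"
    hence "mat_adjoint A $$ (i,j) = cnj (A $$ (j,i))" using assms(1) by (simp add: adj_index)
    also have "\<dots> = A $$ (i,j)" using assms(2)[of j i] ij assms(1) by simp
    finally show "mat_adjoint A $$ (i,j) = A $$ (i,j)" .
  qed (use assms(1) in \<open>auto simp: adj_dim\<close>)
qed

lemma hermitianD:
  assumes "hermitian d A" "i < d" "j < d"
  shows "A $$ (j,i) = cnj (A $$ (i,j))" "A \<in> carrier_mat d d"
proof -
  have A: "A \<in> carrier_mat d d" and adj: "mat_adjoint A = A" using assms unfolding hermitian_def by auto
  have "mat_adjoint A $$ (j,i) = cnj (A $$ (i,j))" using A assms by (simp add: adj_index)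
  thus "A $$ (j,i) = cnj (A $$ (i,j))" using adj by simp
  show "A \<in> carrier_mat d d" by fact
qed

definition hf :: "nat \<Rightarrow> complex mat \<Rightarrow> (nat \<Rightarrow> complex) \<Rightarrow> (nat \<Rightarrow> complex) \<Rightarrow> complex" where
  "hf d A x y = (\<Sum>i<d. \<Sum>j<d. cnj (x i) * A $$ (i,j) * y j)"

lemma qform_hf:
  assumes "A \<in> carrier_mat d d" "v \<in> carrier_vec d"
  shows "(A *\<^sub>v v) \<bullet>c v = hf d A (\<lambda>i. v $ i) (\<lambda>i. v $ i)"
  using assms unfolding hf_def
  by (auto simp: scalar_prod_def atLeast0LessThan sum_distrib_left sum_distrib_right mult_ac intro!: sum.cong)

lemma psdI:
  assumes "A \<in> carrier_mat d d" "\<And>i j. i < d \<Longrightarrow> j < d \<Longrightarrow> A $$ (j,i) = cnj (A $$ (i,j))"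
    "\<And>v. v \<in> carrier_vec d \<Longrightarrow> 0 \<le> Re (hf d A (\<lambda>i. v $ i) (\<lambda>i. v $ i))"
  shows "psd d A"
proof -
  have "hermitian d A" by (rule hermitianI[OF assms(1,2)])
  moreover have "0 \<le> Re ((A *\<^sub>v v) \<bullet>c v)" if "v \<in> carrier_vec d" for v
    using assms(3)[OF that] qform_hf[OF assms(1) that] by simp
  ultimately show ?thesis unfolding psd_def by blast
qed

lemma psdD:
  assumes "psd d A"
  shows "A \<in> carrier_mat d d" "\<And>i j. i < d \<Longrightarrow> j < d \<Longrightarrow> A $$ (j,i) = cnj (A $$ (i,j))"
    "\<And>x. 0 \<le> Re (hf d A x x)"
proof -
  show A: "A \<in> carrier_mat d d" using assms unfolding psd_def hermitian_def by auto
  show "\<And>i j. i < d \<Longrightarrow> j < d \<Longrightarrow> A $$ (j,i) = cnj (A $$ (i,j))"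
    using assms hermitianD unfolding psd_def by blast
  fix x :: "nat \<Rightarrow> complex"
  have "hf d A x x = hf d A (\<lambda>i. vec d x $ i) (\<lambda>i. vec d x $ i)"
    unfolding hf_def by (intro sum.cong refl) auto
  also have "\<dots> = (A *\<^sub>v vec d x) \<bullet>c vec d x" using A by (simp add: qform_hf)
  finally show "0 \<le> Re (hf d A x x)" using assms unfolding psd_def by auto
qed

abbreviation Wf :: "complex mat \<Rightarrow> nat \<Rightarrow> nat \<Rightarrow> complex" where
  "Wf W \<equiv> \<lambda>p q. W $$ (p,q)"

lemma EW1:
  assumes W: "ent_witness m n W" and A: "density_op m A" and B: "density_op n B"
  shows "0 \<le> Re (Hs m n (Wf W) (\<lambda>s t s' t'. A $$ (s',s) * B $$ (t',t)))"
proof -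
  define S where "S = mat (m * n) (m * n)
              (\<lambda>(i, j). \<Sum>l<(1::nat). complex_of_real 1 * kron_mat A B $$ (i, j))"
  have c1: "\<forall>l<(1::nat). 0 \<le> (1::real) \<and> density_op m A \<and> density_op n B"
    using A B by simp
  have c2: "(\<Sum>l<(1::nat). (1::real)) = 1" by simp
  have sep: "separable m n S" unfolding separable_def
    apply (rule exI[where x="1::nat"])
    apply (rule exI[where x="\<lambda>_::nat. 1::real"])
    apply (rule exI[where x="\<lambda>_::nat. A"])
    apply (rule exI[where x="\<lambda>_::nat. B"])
    by (intro conjI c1 c2 S_def)
  have Wc: "W \<in> carrier_mat (m*n) (m*n)" using W unfolding ent_witness_def hermitian_def by auto
  have Ac: "A \<in> carrier_mat m m" and Bc: "B \<in> carrier_mat n n"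
    using A B unfolding density_op_def psd_def hermitian_def by auto
  have Sc: "S \<in> carrier_mat (m*n) (m*n)" unfolding S_def by simp
  have "0 \<le> Re (mtrace (W * S))" using W sep unfolding ent_witness_def by blast
  also have "mtrace (W * S) = Hs m n (Wf W) (\<lambda>s t s' t'. S $$ (s'*n+t', s*n+t))"
    by (rule mtrace_mult[OF Wc Sc])
  also have "\<dots> = Hs m n (Wf W) (\<lambda>s t s' t'. A $$ (s',s) * B $$ (t',t))"
  proof (rule Hs_cong)
    fix s t s' t' assume i: "s < m" "t < n" "s' < m" "t' < n"
    show "S $$ (s'*n+t', s*n+t) = A $$ (s',s) * B $$ (t',t)"
      unfolding S_def using i idx_lt[of s m t n] idx_lt[of s' m t' n] kron_entry[OF Ac Bc i(1,3,2,4)]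
      by simp
  qed
  finally show ?thesis .
qed

lemma mtrace_alt: "A \<in> carrier_mat d d \<Longrightarrow> mtrace A = (\<Sum>i<d. A $$ (i,i))"
  unfolding mtrace_def by simp

lemma psd_scale:
  assumes A: "psd d A" and c: "c \<ge> 0"
  shows "psd d (mat d d (\<lambda>(i,j). complex_of_real c * A $$ (i,j)))"
proof (rule psdI)
  show "mat d d (\<lambda>(i,j). complex_of_real c * A $$ (i,j)) \<in> carrier_mat d d" by simp
  fix i j assume "i < d" "j < d"
  thus "mat d d (\<lambda>(i,j). complex_of_real c * A $$ (i,j)) $$ (j,i) = cnj (mat d d (\<lambda>(i,j). complex_of_real c * A $$ (i,j)) $$ (i,j))"
    using psdD(2)[OF A, of i j] by simp
next
  fix v :: "complex vec"
  have "hf d (mat d d (\<lambda>(i,j). complex_of_real c * A $$ (i,j))) (\<lambda>i. v $ i) (\<lambda>i. v $ i)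
      = complex_of_real c * hf d A (\<lambda>i. v $ i) (\<lambda>i. v $ i)"
    unfolding hf_def by (simp add: sum_distrib_left mult_ac)
  thus "0 \<le> Re (hf d (mat d d (\<lambda>(i,j). complex_of_real c * A $$ (i,j))) (\<lambda>i. v $ i) (\<lambda>i. v $ i))"
    using psdD(3)[OF A] c by simp
qed

lemma EW2:
  assumes W: "ent_witness m n W" and A: "psd m A" and B: "psd n B"
    and tA: "mtrace A = complex_of_real \<alpha>" "\<alpha> > 0" and tB: "mtrace B = complex_of_real \<beta>" "\<beta> > 0"
  shows "0 \<le> Re (Hs m n (Wf W) (\<lambda>s t s' t'. A $$ (s',s) * B $$ (t',t)))"
proof -
  define A' where "A' = mat m m (\<lambda>(i,j). complex_of_real (1/\<alpha>) * A $$ (i,j))"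
  define B' where "B' = mat n n (\<lambda>(i,j). complex_of_real (1/\<beta>) * B $$ (i,j))"
  have Ac: "A \<in> carrier_mat m m" and Bc: "B \<in> carrier_mat n n" using psdD(1) A B by auto
  have "mtrace A' = complex_of_real (1/\<alpha>) * mtrace A"
    unfolding A'_def using Ac by (simp add: mtrace_def sum_distrib_left)
  hence tA': "mtrace A' = 1" using tA by simp
  have "mtrace B' = complex_of_real (1/\<beta>) * mtrace B"
    unfolding B'_def using Bc by (simp add: mtrace_def sum_distrib_left)
  hence tB': "mtrace B' = 1" using tB by simp
  have dA: "density_op m A'" unfolding density_op_def A'_def
    using psd_scale[OF A, of "1/\<alpha>"] tA' tA(2) unfolding A'_def by simp
  have dB: "density_op n B'" unfolding density_op_def B'_def
    using psd_scale[OF B, of "1/\<beta>"] tB' tB(2) unfolding B'_def by simp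
  have "0 \<le> Re (Hs m n (Wf W) (\<lambda>s t s' t'. A' $$ (s',s) * B' $$ (t',t)))" by (rule EW1[OF W dA dB])
  also have "Hs m n (Wf W) (\<lambda>s t s' t'. A' $$ (s',s) * B' $$ (t',t))
     = Hs m n (Wf W) (\<lambda>s t s' t'. complex_of_real (1/(\<alpha>*\<beta>)) * (A $$ (s',s) * B $$ (t',t)))"
    by (rule Hs_cong) (simp add: A'_def B'_def)
  also have "\<dots> = complex_of_real (1/(\<alpha>*\<beta>)) * Hs m n (Wf W) (\<lambda>s t s' t'. A $$ (s',s) * B $$ (t',t))"
    by (rule Hs_scale)
  finally have "0 \<le> (1/(\<alpha>*\<beta>)) * Re (Hs m n (Wf W) (\<lambda>s t s' t'. A $$ (s',s) * B $$ (t',t)))" by simp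
  moreover have "\<alpha> * \<beta> > 0" using tA(2) tB(2) by simp
  ultimately show ?thesis by (simp add: zero_le_divide_iff)
qed

lemma cinner_sum: "x \<in> carrier_vec n \<Longrightarrow> y \<in> carrier_vec n \<Longrightarrow> x \<bullet>c y = (\<Sum>s<n. x $ s * cnj (y $ s))"
  by (simp add: scalar_prod_def atLeast0LessThan)

lemma cnorm_sq: "z * cnj z = complex_of_real ((cmod z)^2)"
  by (metis complex_norm_square of_real_power)

lemma sum_cnj_sq: "(\<Sum>i\<in>I. z i * cnj (z i)) = complex_of_real (\<Sum>i\<in>I. (cmod (z i))^2)"
  by (simp add: cnorm_sq)

lemma psd_rank1:
  fixes x :: "nat \<Rightarrow> complex"
  shows "psd d (mat d d (\<lambda>(i,j). x i * cnj (x j)))"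
proof (rule psdI)
  show "mat d d (\<lambda>(i,j). x i * cnj (x j)) \<in> carrier_mat d d" by simp
  fix i j assume "i < d" "j < d"
  thus "mat d d (\<lambda>(i,j). x i * cnj (x j)) $$ (j,i) = cnj (mat d d (\<lambda>(i,j). x i * cnj (x j)) $$ (i,j))"
    by simp
next
  fix v :: "complex vec"
  define z where "z = (\<Sum>i<d. cnj (v $ i) * x i)"
  have "hf d (mat d d (\<lambda>(i,j). x i * cnj (x j))) (\<lambda>i. v $ i) (\<lambda>i. v $ i) = z * cnj z"
    unfolding hf_def z_def apply (simp add: sum_distrib_left sum_distrib_right mult_ac)
    by (rule sum.swap)
  thus "0 \<le> Re (hf d (mat d d (\<lambda>(i,j). x i * cnj (x j))) (\<lambda>i. v $ i) (\<lambda>i. v $ i))"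
    by (simp add: cnorm_sq)
qed

lemma trace_rank1: "mtrace (mat d d (\<lambda>(i,j). x i * cnj (x j))) = complex_of_real (\<Sum>i<d. (cmod (x i))^2)"
  unfolding mtrace_def by (simp add: sum_cnj_sq)

lemma sum_sq_zero:
  fixes x :: "nat \<Rightarrow> complex"
  assumes "(\<Sum>i<d. (cmod (x i))^2) = 0" "i < d"
  shows "x i = 0"
proof -
  have "\<forall>i\<in>{..<d}. (cmod (x i))^2 = 0"
    using assms(1) by (subst sum_nonneg_eq_0_iff[symmetric]) auto
  thus ?thesis using assms(2) by simp
qed

lemma EW_rank1:
  assumes W: "ent_witness m n W"
  shows "0 \<le> Re (Hs m n (Wf W) (\<lambda>s t s' t'. x s' * cnj (x s) * (y t' * cnj (y t))))"
proof (cases "(\<Sum>i<m. (cmod (x i))^2) = 0 \<or> (\<Sum>i<n. (cmod (y i))^2) = 0")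
  case True
  have "Hs m n (Wf W) (\<lambda>s t s' t'. x s' * cnj (x s) * (y t' * cnj (y t))) = Hs m n (Wf W) (\<lambda>s t s' t'. 0)"
  proof (rule Hs_cong)
    fix s t s' t' assume i: "s < m" "t < n" "s' < m" "t' < n"
    from True show "x s' * cnj (x s) * (y t' * cnj (y t)) = 0"
    proof
      assume "(\<Sum>i<m. (cmod (x i))^2) = 0"
      hence "x s = 0" using sum_sq_zero[of x m s] i by blast
      thus ?thesis by simp
    next
      assume "(\<Sum>i<n. (cmod (y i))^2) = 0"
      hence "y t = 0" using sum_sq_zero[of y n t] i by blast
      thus ?thesis by simp
    qed
  qed
  also have "\<dots> = 0" unfolding Hs_def by simp
  finally show ?thesis by simp
next
  case False
  have "(\<Sum>i<m. (cmod (x i))^2) \<ge> 0" "(\<Sum>i<n. (cmod (y i))^2) \<ge> 0" by (simp_all add: sum_nonneg)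
  hence pa: "(\<Sum>i<m. (cmod (x i))^2) > 0" and pb: "(\<Sum>i<n. (cmod (y i))^2) > 0" using False by linarith+
  have "0 \<le> Re (Hs m n (Wf W) (\<lambda>s t s' t'. mat m m (\<lambda>(i,j). x i * cnj (x j)) $$ (s',s) * mat n n (\<lambda>(i,j). y i * cnj (y j)) $$ (t',t)))"
    by (rule EW2[OF W psd_rank1 psd_rank1 trace_rank1 pa trace_rank1 pb])
  also have "Hs m n (Wf W) (\<lambda>s t s' t'. mat m m (\<lambda>(i,j). x i * cnj (x j)) $$ (s',s) * mat n n (\<lambda>(i,j). y i * cnj (y j)) $$ (t',t))
     = Hs m n (Wf W) (\<lambda>s t s' t'. x s' * cnj (x s) * (y t' * cnj (y t)))"
    by (rule Hs_cong) simp
  finally show ?thesis .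
qed

lemma bessel:
  fixes f :: "nat \<Rightarrow> nat \<Rightarrow> complex" and v :: "nat \<Rightarrow> complex"
  assumes ON: "\<And>l l'. l < k \<Longrightarrow> l' < k \<Longrightarrow> (\<Sum>s<n. f l s * cnj (f l' s)) = (if l = l' then 1 else 0)"
  shows "(\<Sum>l<k. (cmod (\<Sum>s<n. cnj (f l s) * v s))^2) \<le> (\<Sum>s<n. (cmod (v s))^2)"
proof -
  define b where "b l = (\<Sum>s<n. cnj (f l s) * v s)" for l
  define w where "w s = (\<Sum>l<k. b l * f l s)" for s
  have e1: "(\<Sum>s<n. w s * cnj (v s)) = (\<Sum>l<k. b l * cnj (b l))"
    unfolding w_def b_def by (simp add: sum_distrib_left sum_distrib_right sum.swap[of _ "{..<k}"] mult_ac)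
  have e2: "(\<Sum>s<n. v s * cnj (w s)) = (\<Sum>l<k. b l * cnj (b l))"
  proof -
    have "(\<Sum>s<n. v s * cnj (w s)) = cnj (\<Sum>s<n. w s * cnj (v s))" by (simp add: mult.commute)
    also have "\<dots> = (\<Sum>l<k. b l * cnj (b l))" unfolding e1 by (simp add: mult.commute)
    finally show ?thesis .
  qed
  have e3: "(\<Sum>s<n. w s * cnj (w s)) = (\<Sum>l<k. b l * cnj (b l))"
  proof -
    have "(\<Sum>s<n. w s * cnj (w s)) = (\<Sum>s<n. \<Sum>l<k. \<Sum>l'<k. b l * cnj (b l') * (f l s * cnj (f l' s)))"
      unfolding w_def by (simp add: sum_product mult_ac)
    also have "\<dots> = (\<Sum>l<k. \<Sum>s<n. \<Sum>l'<k. b l * cnj (b l') * (f l s * cnj (f l' s)))"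
      by (rule sum.swap)
    also have "\<dots> = (\<Sum>l<k. \<Sum>l'<k. \<Sum>s<n. b l * cnj (b l') * (f l s * cnj (f l' s)))"
      by (rule sum.cong[OF refl], rule sum.swap)
    also have "\<dots> = (\<Sum>l<k. \<Sum>l'<k. b l * cnj (b l') * (\<Sum>s<n. f l s * cnj (f l' s)))"
      by (simp add: sum_distrib_left)
    also have "\<dots> = (\<Sum>l<k. \<Sum>l'<k. if l = l' then b l * cnj (b l') else 0)"
      by (intro sum.cong refl) (simp add: ON)
    also have "\<dots> = (\<Sum>l<k. b l * cnj (b l))" by simp
    finally show ?thesis .
  qed
  have "(\<Sum>s<n. (v s - w s) * cnj (v s - w s)) = (\<Sum>s<n. v s * cnj (v s)) - (\<Sum>s<n. v s * cnj (w s))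
      - (\<Sum>s<n. w s * cnj (v s)) + (\<Sum>s<n. w s * cnj (w s))"
    by (simp add: algebra_simps sum.distrib sum_subtractf)
  also have "\<dots> = (\<Sum>s<n. v s * cnj (v s)) - (\<Sum>l<k. b l * cnj (b l))"
    unfolding e1 e2 e3 by simp
  finally have X: "(\<Sum>s<n. (v s - w s) * cnj (v s - w s)) = (\<Sum>s<n. v s * cnj (v s)) - (\<Sum>l<k. b l * cnj (b l))" .
  have "complex_of_real (\<Sum>s<n. (cmod (v s - w s))^2) = complex_of_real (\<Sum>s<n. (cmod (v s))^2) - complex_of_real (\<Sum>l<k. (cmod (b l))^2)"
    using X sum_cnj_sq[of "\<lambda>s. v s - w s" "{..<n}"] sum_cnj_sq[of v "{..<n}"] sum_cnj_sq[of b "{..<k}"]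
    by simp
  hence "(\<Sum>s<n. (cmod (v s - w s))^2) = (\<Sum>s<n. (cmod (v s))^2) - (\<Sum>l<k. (cmod (b l))^2)"
    by (simp only: of_real_diff[symmetric] of_real_eq_iff)
  moreover have "(\<Sum>s<n. (cmod (v s - w s))^2) \<ge> 0" by (simp add: sum_nonneg)
  ultimately show ?thesis unfolding b_def by simp
qed

definition Pm :: "nat \<Rightarrow> (nat \<Rightarrow> nat \<Rightarrow> complex) \<Rightarrow> nat \<Rightarrow> complex mat" where
  "Pm d F k = mat d d (\<lambda>(i,j). \<Sum>l<k. F l i * cnj (F l j))"

definition Cm :: "nat \<Rightarrow> real \<Rightarrow> (nat \<Rightarrow> nat \<Rightarrow> complex) \<Rightarrow> nat \<Rightarrow> complex mat" where
  "Cm d c F k = mat d d (\<lambda>(i,j). (if i = j then complex_of_real c else 0) - (\<Sum>l<k. F l i * cnj (F l j)))"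

definition Im :: "nat \<Rightarrow> complex mat" where
  "Im d = mat d d (\<lambda>(i,j). if i = j then 1 else 0)"

lemma mult_if0: "x * (if P then c else 0) * y = (if P then x * c * y else (0::complex))" by simp

lemma Re_sq_sum: "Re (\<Sum>i\<in>I. cnj (z i) * z i) = (\<Sum>i\<in>I. (cmod (z i))^2)"
proof -
  have "\<And>i. Re (cnj (z i) * z i) = (cmod (z i))^2" by (metis Re_complex_of_real cnorm_sq mult.commute)
  thus ?thesis by simp
qed

lemma hf_P_term: fixes d k :: nat and F :: "nat \<Rightarrow> nat \<Rightarrow> complex" shows "(\<Sum>i<d. \<Sum>j<d. cnj (v i) * (\<Sum>l<k. F l i * cnj (F l j)) * v j)
   = (\<Sum>l<k. cnj (\<Sum>s<d. cnj (F l s) * v s) * (\<Sum>s<d. cnj (F l s) * v s))"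
proof -
  have "(\<Sum>i<d. \<Sum>j<d. cnj (v i) * (\<Sum>l<k. F l i * cnj (F l j)) * v j)
      = (\<Sum>i<d. \<Sum>j<d. \<Sum>l<k. cnj (v i) * F l i * (cnj (F l j) * v j))"
    by (simp add: sum_distrib_left sum_distrib_right mult_ac)
  also have "\<dots> = (\<Sum>i<d. \<Sum>l<k. \<Sum>j<d. cnj (v i) * F l i * (cnj (F l j) * v j))"
    by (rule sum.cong[OF refl], rule sum.swap)
  also have "\<dots> = (\<Sum>l<k. \<Sum>i<d. \<Sum>j<d. cnj (v i) * F l i * (cnj (F l j) * v j))"
    by (rule sum.swap)
  also have "\<dots> = (\<Sum>l<k. (\<Sum>i<d. cnj (v i) * F l i) * (\<Sum>j<d. cnj (F l j) * v j))"
    by (rule sum.cong[OF refl], rule sum_product[symmetric])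
  also have "\<dots> = (\<Sum>l<k. cnj (\<Sum>s<d. cnj (F l s) * v s) * (\<Sum>s<d. cnj (F l s) * v s))"
    by (simp add: mult.commute)
  finally show ?thesis .
qed

lemma psd_P: "psd d (Pm d F k)"
proof (rule psdI)
  show "Pm d F k \<in> carrier_mat d d" unfolding Pm_def by simp
  fix i j assume "i < d" "j < d"
  thus "Pm d F k $$ (j,i) = cnj (Pm d F k $$ (i,j))" unfolding Pm_def by (simp add: mult.commute)
next
  fix v :: "complex vec"
  have "hf d (Pm d F k) (\<lambda>i. v $ i) (\<lambda>i. v $ i) = (\<Sum>l<k. cnj (\<Sum>s<d. cnj (F l s) * v $ s) * (\<Sum>s<d. cnj (F l s) * v $ s))"
    unfolding hf_def Pm_def using hf_P_term[where v="\<lambda>i. v $ i" and d=d and k=k and F=F] by simp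
  thus "0 \<le> Re (hf d (Pm d F k) (\<lambda>i. v $ i) (\<lambda>i. v $ i))" by (simp only: Re_sq_sum sum_nonneg zero_le_power2)
qed

lemma psd_I: "psd d (Im d)"
proof (rule psdI)
  show "Im d \<in> carrier_mat d d" unfolding Im_def by simp
  fix i j assume "i < d" "j < d"
  thus "Im d $$ (j,i) = cnj (Im d $$ (i,j))" unfolding Im_def by simp
next
  fix v :: "complex vec"
  have "hf d (Im d) (\<lambda>i. v $ i) (\<lambda>i. v $ i) = (\<Sum>i<d. cnj (v $ i) * v $ i)"
    unfolding hf_def Im_def by (simp add: mult_if0)
  thus "0 \<le> Re (hf d (Im d) (\<lambda>i. v $ i) (\<lambda>i. v $ i))" by (simp only: Re_sq_sum sum_nonneg zero_le_power2)
qed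

lemma psd_C:
  assumes ON: "\<And>l l'. l < k \<Longrightarrow> l' < k \<Longrightarrow> (\<Sum>s<d. F l s * cnj (F l' s)) = (if l = l' then 1 else 0)"
    and c: "c \<ge> 1"
  shows "psd d (Cm d c F k)"
proof (rule psdI)
  show "Cm d c F k \<in> carrier_mat d d" unfolding Cm_def by simp
  fix i j assume "i < d" "j < d"
  thus "Cm d c F k $$ (j,i) = cnj (Cm d c F k $$ (i,j))" unfolding Cm_def by (simp add: mult.commute)
next
  fix v :: "complex vec"
  have "hf d (Cm d c F k) (\<lambda>i. v $ i) (\<lambda>i. v $ i)
     = (\<Sum>i<d. \<Sum>j<d. cnj (v $ i) * (if i = j then complex_of_real c else 0) * v $ j)
       - (\<Sum>i<d. \<Sum>j<d. cnj (v $ i) * (\<Sum>l<k. F l i * cnj (F l j)) * v $ j)"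
    unfolding hf_def Cm_def by (simp add: algebra_simps sum_subtractf)
  also have "(\<Sum>i<d. \<Sum>j<d. cnj (v $ i) * (if i = j then complex_of_real c else 0) * v $ j)
      = complex_of_real c * (\<Sum>i<d. cnj (v $ i) * v $ i)"
    by (simp only: mult_if0) (simp add: sum_distrib_left mult_ac)
  also have "(\<Sum>i<d. \<Sum>j<d. cnj (v $ i) * (\<Sum>l<k. F l i * cnj (F l j)) * v $ j)
     = (\<Sum>l<k. cnj (\<Sum>s<d. cnj (F l s) * v $ s) * (\<Sum>s<d. cnj (F l s) * v $ s))"
    by (rule hf_P_term)
  finally have "Re (hf d (Cm d c F k) (\<lambda>i. v $ i) (\<lambda>i. v $ i))
      = c * Re (\<Sum>i<d. cnj (v $ i) * v $ i) - Re (\<Sum>l<k. cnj (\<Sum>s<d. cnj (F l s) * v $ s) * (\<Sum>s<d. cnj (F l s) * v $ s))"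
    by (simp only: minus_complex.sel) simp
  hence eq: "Re (hf d (Cm d c F k) (\<lambda>i. v $ i) (\<lambda>i. v $ i))
      = c * (\<Sum>i<d. (cmod (v $ i))^2) - (\<Sum>l<k. (cmod (\<Sum>s<d. cnj (F l s) * v $ s))^2)"
    unfolding Re_sq_sum .
  have b: "(\<Sum>l<k. (cmod (\<Sum>s<d. cnj (F l s) * v $ s))^2) \<le> (\<Sum>i<d. (cmod (v $ i))^2)"
    by (rule bessel[OF ON])
  have "(\<Sum>i<d. (cmod (v $ i))^2) \<le> c * (\<Sum>i<d. (cmod (v $ i))^2)"
  proof -
    have nn: "(\<Sum>i<d. (cmod (v $ i))^2) \<ge> 0" by (simp add: sum_nonneg)
    show ?thesis using mult_right_mono[OF c nn] by simp
  qed
  thus "0 \<le> Re (hf d (Cm d c F k) (\<lambda>i. v $ i) (\<lambda>i. v $ i))" using eq b by linarith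
qed

lemma diag_bound:
  fixes d k :: nat and F :: "nat \<Rightarrow> nat \<Rightarrow> complex"
  assumes ON: "\<And>l l'. l < k \<Longrightarrow> l' < k \<Longrightarrow> (\<Sum>s<d. F l s * cnj (F l' s)) = (if l = l' then 1 else 0)"
    and i: "i < d"
  shows "(\<Sum>l<k. (cmod (F l i))^2) \<le> 1"
proof -
  have "(\<Sum>l<k. (cmod (\<Sum>s<d. cnj (F l s) * (if s = i then 1 else 0)))^2) \<le> (\<Sum>s<d. (cmod (if s = i then 1 else 0::complex))^2)"
    by (rule bessel[OF ON])
  moreover have "\<And>s. (cmod (if s = i then 1 else 0::complex))^2 = (if s = i then 1 else 0)" by simp
  moreover have "\<And>l s. cnj (F l s) * (if s = i then 1 else 0) = (if s = i then cnj (F l s) else 0)" by simp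
  ultimately show ?thesis using i by simp
qed

lemma trace_C:
  fixes d k :: nat and F :: "nat \<Rightarrow> nat \<Rightarrow> complex"
  assumes ON: "\<And>l l'. l < k \<Longrightarrow> l' < k \<Longrightarrow> (\<Sum>s<d. F l s * cnj (F l' s)) = (if l = l' then 1 else 0)"
  shows "mtrace (Cm d c F k) = complex_of_real (\<Sum>i<d. c - (\<Sum>l<k. (cmod (F l i))^2))"
  unfolding mtrace_def Cm_def by (simp add: cnorm_sq sum_subtractf)

lemma trace_C_pos:
  fixes d k :: nat and F :: "nat \<Rightarrow> nat \<Rightarrow> complex"
  assumes ON: "\<And>l l'. l < k \<Longrightarrow> l' < k \<Longrightarrow> (\<Sum>s<d. F l s * cnj (F l' s)) = (if l = l' then 1 else 0)"
    and c: "c > 1" and d: "d > 0"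
  shows "(\<Sum>i<d. c - (\<Sum>l<k. (cmod (F l i))^2)) > 0"
proof -
  have "(\<Sum>i<d. c - (\<Sum>l<k. (cmod (F l i))^2)) \<ge> (\<Sum>i<d. c - 1)"
    by (rule sum_mono) (use diag_bound[OF ON] in auto)
  moreover have "(\<Sum>i<d. c - 1) = real d * (c - 1)" by simp
  moreover have "real d * (c - 1) > 0" using c d by (intro mult_pos_pos) auto
  ultimately show ?thesis by linarith
qed

lemma trace_P:
  fixes d k :: nat and F :: "nat \<Rightarrow> nat \<Rightarrow> complex"
  assumes ON: "\<And>l l'. l < k \<Longrightarrow> l' < k \<Longrightarrow> (\<Sum>s<d. F l s * cnj (F l' s)) = (if l = l' then 1 else 0)"
  shows "mtrace (Pm d F k) = complex_of_real (real k)"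
proof -
  have "mtrace (Pm d F k) = (\<Sum>i<d. \<Sum>l<k. F l i * cnj (F l i))" unfolding mtrace_def Pm_def by simp
  also have "\<dots> = (\<Sum>l<k. \<Sum>i<d. F l i * cnj (F l i))" by (rule sum.swap)
  also have "\<dots> = (\<Sum>l<k. 1)" by (rule sum.cong) (simp_all add: ON)
  finally show ?thesis by simp
qed

lemma trace_I: "mtrace (Im d) = complex_of_real (real d)"
  unfolding mtrace_def Im_def by simp

lemma le_scale:
  fixes x y :: real
  assumes "\<And>c. c > 1 \<Longrightarrow> x \<le> c * y"
  shows "x \<le> y"
proof (rule field_le_mult_one_interval)
  fix z :: real assume z: "0 < z" "z < 1"
  have "x \<le> (1/z) * y" using assms[of "1/z"] z by simp
  hence "z * x \<le> z * ((1/z) * y)" using z by (intro mult_left_mono) auto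
  thus "z * x \<le> y" using z by simp
qed

lemma mult_if1: "x * (if P then c else 0) = (if P then x * c else (0::complex))" by simp

lemma Hs_trace:
  assumes W: "W \<in> carrier_mat (m*n) (m*n)"
  shows "Hs m n (Wf W) (\<lambda>s t s' t'. Im m $$ (s',s) * Im n $$ (t',t)) = mtrace W"
proof -
  have "Hs m n (Wf W) (\<lambda>s t s' t'. Im m $$ (s',s) * Im n $$ (t',t))
      = Hs m n (Wf W) (\<lambda>s t s' t'. if s' = s \<and> t' = t then 1 else 0)"
    by (rule Hs_cong) (simp add: Im_def)
  also have "\<dots> = (\<Sum>s<m. \<Sum>t<n. W $$ (s*n+t, s*n+t))"
    unfolding Hs_def by (simp add: if_conj0 mult_if1 sum_if_const)
  also have "\<dots> = mtrace W" unfolding mtrace_def using W sum_split[of "\<lambda>p. W $$ (p,p)" m n] by simp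
  finally show ?thesis .
qed

lemma sum_G_le:
  fixes E F :: "nat \<Rightarrow> nat \<Rightarrow> complex"
  assumes W: "ent_witness m n W" and m: "m > 0" and n: "n > 0" and k: "k > 0"
    and onE: "\<And>l l'. l < k \<Longrightarrow> l' < k \<Longrightarrow> (\<Sum>s<m. E l s * cnj (E l' s)) = (if l = l' then 1 else 0)"
    and onF: "\<And>l l'. l < k \<Longrightarrow> l' < k \<Longrightarrow> (\<Sum>s<n. F l s * cnj (F l' s)) = (if l = l' then 1 else 0)"
  shows "(\<Sum>i<k. \<Sum>j<k. Re (Hs m n (Wf W) (\<lambda>s t s' t'. E i s' * cnj (E i s) * (F j t' * cnj (F j t)))))
     \<le> Re (mtrace W)"
proof -
  have Wc: "W \<in> carrier_mat (m*n) (m*n)" using W unfolding ent_witness_def hermitian_def by auto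
  let ?H = "Hs m n (Wf W)"
  have A: "(\<Sum>i<k. \<Sum>j<k. ?H (\<lambda>s t s' t'. E i s' * cnj (E i s) * (F j t' * cnj (F j t))))
     = ?H (\<lambda>s t s' t'. Pm m E k $$ (s',s) * Pm n F k $$ (t',t))"
  proof -
    have "?H (\<lambda>s t s' t'. Pm m E k $$ (s',s) * Pm n F k $$ (t',t))
       = ?H (\<lambda>s t s' t'. \<Sum>i<k. \<Sum>j<k. E i s' * cnj (E i s) * (F j t' * cnj (F j t)))"
      by (rule Hs_cong) (simp add: Pm_def sum_product)
    also have "\<dots> = (\<Sum>i<k. ?H (\<lambda>s t s' t'. \<Sum>j<k. E i s' * cnj (E i s) * (F j t' * cnj (F j t))))"
      by (rule Hs_sum)
    also have "\<dots> = (\<Sum>i<k. \<Sum>j<k. ?H (\<lambda>s t s' t'. E i s' * cnj (E i s) * (F j t' * cnj (F j t))))"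
      by (rule sum.cong[OF refl], rule Hs_sum)
    finally show ?thesis by simp
  qed
  have trPA: "mtrace (Pm m E k) = complex_of_real (real k)" by (rule trace_P[OF onE])
  have trI: "mtrace (Im n) = complex_of_real (real n)" "mtrace (Im m) = complex_of_real (real m)"
    by (rule trace_I)+
  have B: "Re (?H (\<lambda>s t s' t'. Pm m E k $$ (s',s) * Pm n F k $$ (t',t)))
        \<le> Re (?H (\<lambda>s t s' t'. Pm m E k $$ (s',s) * Im n $$ (t',t)))"
  proof (rule le_scale)
    fix c :: real assume c: "c > 1"
    have "0 \<le> Re (?H (\<lambda>s t s' t'. Pm m E k $$ (s',s) * Cm n c F k $$ (t',t)))"
      by (rule EW2[OF W psd_P psd_C[OF onF] trPA _ trace_C[OF onF] trace_C_pos[OF onF c n]])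
         (use c k in auto)
    also have "?H (\<lambda>s t s' t'. Pm m E k $$ (s',s) * Cm n c F k $$ (t',t))
       = ?H (\<lambda>s t s' t'. complex_of_real c * (Pm m E k $$ (s',s) * Im n $$ (t',t)) - Pm m E k $$ (s',s) * Pm n F k $$ (t',t))"
      by (rule Hs_cong) (simp add: Cm_def Im_def Pm_def algebra_simps)
    also have "\<dots> = complex_of_real c * ?H (\<lambda>s t s' t'. Pm m E k $$ (s',s) * Im n $$ (t',t)) - ?H (\<lambda>s t s' t'. Pm m E k $$ (s',s) * Pm n F k $$ (t',t))"
      by (simp only: Hs_diff Hs_scale)
    finally show "Re (?H (\<lambda>s t s' t'. Pm m E k $$ (s',s) * Pm n F k $$ (t',t)))
        \<le> c * Re (?H (\<lambda>s t s' t'. Pm m E k $$ (s',s) * Im n $$ (t',t)))" by simp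
  qed
  have C: "Re (?H (\<lambda>s t s' t'. Pm m E k $$ (s',s) * Im n $$ (t',t)))
        \<le> Re (?H (\<lambda>s t s' t'. Im m $$ (s',s) * Im n $$ (t',t)))"
  proof (rule le_scale)
    fix c :: real assume c: "c > 1"
    have "0 \<le> Re (?H (\<lambda>s t s' t'. Cm m c E k $$ (s',s) * Im n $$ (t',t)))"
      by (rule EW2[OF W psd_C[OF onE] psd_I trace_C[OF onE] trace_C_pos[OF onE c m] trI(1)])
         (use c n in auto)
    also have "?H (\<lambda>s t s' t'. Cm m c E k $$ (s',s) * Im n $$ (t',t))
       = ?H (\<lambda>s t s' t'. complex_of_real c * (Im m $$ (s',s) * Im n $$ (t',t)) - Pm m E k $$ (s',s) * Im n $$ (t',t))"
      by (rule Hs_cong) (simp add: Cm_def Im_def Pm_def algebra_simps)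
    also have "\<dots> = complex_of_real c * ?H (\<lambda>s t s' t'. Im m $$ (s',s) * Im n $$ (t',t)) - ?H (\<lambda>s t s' t'. Pm m E k $$ (s',s) * Im n $$ (t',t))"
      by (simp only: Hs_diff Hs_scale)
    finally show "Re (?H (\<lambda>s t s' t'. Pm m E k $$ (s',s) * Im n $$ (t',t)))
        \<le> c * Re (?H (\<lambda>s t s' t'. Im m $$ (s',s) * Im n $$ (t',t)))" by simp
  qed
  have "(\<Sum>i<k. \<Sum>j<k. Re (?H (\<lambda>s t s' t'. E i s' * cnj (E i s) * (F j t' * cnj (F j t)))))
      = Re (\<Sum>i<k. \<Sum>j<k. ?H (\<lambda>s t s' t'. E i s' * cnj (E i s) * (F j t' * cnj (F j t))))" by simp
  also have "\<dots> \<le> Re (mtrace W)" unfolding A Hs_trace[OF Wc, symmetric] using B C by linarith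
  finally show ?thesis .
qed

lemma cnj_om: "cnj (om N z) = om N (- z)"
  unfolding om_def cis_cnj by simp

lemma twirl_pt:
  fixes a :: "nat \<Rightarrow> real" and e f :: "nat \<Rightarrow> nat \<Rightarrow> complex" and k :: nat
  assumes a: "\<forall>i<k. 0 \<le> a i"
  shows "(\<Sum>r<2^(k+2). (\<Sum>i<k. complex_of_real (sqrt (a i)) * om (2^(k+2)) (int r * 2^i) * e i s')
          * cnj (\<Sum>i<k. complex_of_real (sqrt (a i)) * om (2^(k+2)) (int r * 2^i) * e i s)
          * ((\<Sum>i<k. complex_of_real (sqrt (a i)) * om (2^(k+2)) (- (int r * 2^i)) * f i t')
          * cnj (\<Sum>i<k. complex_of_real (sqrt (a i)) * om (2^(k+2)) (- (int r * 2^i)) * f i t)))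
    = of_nat (2^(k+2)) * ((\<Sum>i<k. complex_of_real (a i) * e i s' * f i t') * cnj (\<Sum>i<k. complex_of_real (a i) * e i s * f i t)
       + (\<Sum>i<k. \<Sum>j<k. complex_of_real (a i * a j) * (e i s' * cnj (e i s) * (f j t' * cnj (f j t))))
       - (\<Sum>i<k. complex_of_real ((a i)^2) * (e i s' * cnj (e i s) * (f i t' * cnj (f i t)))))"
proof -
  let ?N = "(2::nat)^(k+2)"
  define c where "c i = complex_of_real (sqrt (a i))" for i
  have c2: "c i ^ 2 = complex_of_real (a i)" if "i < k" for i
    unfolding c_def using a that by (simp flip: of_real_power)
  have c4: "c i ^ 4 = complex_of_real ((a i)^2)" if "i < k" for i
  proof -
    have "c i ^ 4 = (c i ^ 2)^2" by simp
    thus ?thesis using c2[OF that] by simp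
  qed
  have cc: "cnj (c i) = c i" for i unfolding c_def by simp
  have cx: "cnj (\<Sum>i<k. c i * om ?N (int r * 2^i) * e i s) = (\<Sum>i<k. c i * om ?N (- (int r * 2^i)) * cnj (e i s))" for r
    by (simp add: cnj_om cc)
  have cy: "cnj (\<Sum>i<k. c i * om ?N (- (int r * 2^i)) * f i t) = (\<Sum>i<k. c i * om ?N (int r * 2^i) * cnj (f i t))" for r
    by (simp add: cnj_om cc)
  have "(\<Sum>r<?N. (\<Sum>i<k. c i * om ?N (int r * 2^i) * e i s')
          * cnj (\<Sum>i<k. c i * om ?N (int r * 2^i) * e i s)
          * ((\<Sum>i<k. c i * om ?N (- (int r * 2^i)) * f i t')
          * cnj (\<Sum>i<k. c i * om ?N (- (int r * 2^i)) * f i t)))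
     = (\<Sum>r<?N. (\<Sum>i<k. c i * om ?N (int r * 2^i) * e i s')
          * (\<Sum>i<k. c i * om ?N (- (int r * 2^i)) * cnj (e i s))
          * (\<Sum>i<k. c i * om ?N (- (int r * 2^i)) * f i t')
          * (\<Sum>i<k. c i * om ?N (int r * 2^i) * cnj (f i t)))"
    unfolding cx cy by (simp add: mult.assoc)
  also have "\<dots> = of_nat ?N * ((\<Sum>i<k. c i^2 * e i s' * f i t') * (\<Sum>i<k. c i^2 * cnj (e i s) * cnj (f i t))
       + (\<Sum>i<k. \<Sum>j<k. c i^2 * c j^2 * e i s' * cnj (e i s) * f j t' * cnj (f j t))
       - (\<Sum>i<k. c i^4 * e i s' * cnj (e i s) * f i t' * cnj (f i t)))"
    by (rule twirl)
  also have "\<dots> = of_nat ?N * ((\<Sum>i<k. complex_of_real (a i) * e i s' * f i t') * cnj (\<Sum>i<k. complex_of_real (a i) * e i s * f i t)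
       + (\<Sum>i<k. \<Sum>j<k. complex_of_real (a i * a j) * (e i s' * cnj (e i s) * (f j t' * cnj (f j t))))
       - (\<Sum>i<k. complex_of_real ((a i)^2) * (e i s' * cnj (e i s) * (f i t' * cnj (f i t)))))"
  proof -
    have 1: "(\<Sum>i<k. c i^2 * e i s' * f i t') = (\<Sum>i<k. complex_of_real (a i) * e i s' * f i t')"
      by (rule sum.cong) (simp_all add: c2)
    have 2: "(\<Sum>i<k. c i^2 * cnj (e i s) * cnj (f i t)) = cnj (\<Sum>i<k. complex_of_real (a i) * e i s * f i t)"
      by (simp, rule sum.cong) (simp_all add: c2)
    have 3: "(\<Sum>i<k. \<Sum>j<k. c i^2 * c j^2 * e i s' * cnj (e i s) * f j t' * cnj (f j t))
        = (\<Sum>i<k. \<Sum>j<k. complex_of_real (a i * a j) * (e i s' * cnj (e i s) * (f j t' * cnj (f j t))))"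
      by (intro sum.cong refl) (simp add: c2 mult_ac)
    have 4: "(\<Sum>i<k. c i^4 * e i s' * cnj (e i s) * f i t' * cnj (f i t))
        = (\<Sum>i<k. complex_of_real ((a i)^2) * (e i s' * cnj (e i s) * (f i t' * cnj (f i t))))"
      by (intro sum.cong refl) (simp add: c4 mult_ac)
    show ?thesis unfolding 1 2 3 4 ..
  qed
  finally show ?thesis unfolding c_def .
qed

lemma psi_entry:
  assumes e_dim: "\<forall>i<k. e i \<in> carrier_vec m" and f_dim: "\<forall>i<k. f i \<in> carrier_vec n"
    and schmidt: "\<psi> = vec (m * n) (\<lambda>t. \<Sum>i<k. complex_of_real (a i) * kron_vec (e i) (f i) $ t)"
    and st: "s < m" "t < n"
  shows "\<psi> $ (s*n+t) = (\<Sum>i<k. complex_of_real (a i) * e i $ s * f i $ t)"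
proof -
  have "\<psi> $ (s*n+t) = (\<Sum>i<k. complex_of_real (a i) * kron_vec (e i) (f i) $ (s*n+t))"
    using schmidt idx_lt[OF st] by simp
  also have "\<dots> = (\<Sum>i<k. complex_of_real (a i) * e i $ s * f i $ t)"
  proof (rule sum.cong[OF refl])
    fix i assume "i \<in> {..<k}"
    hence d: "dim_vec (e i) = m" "dim_vec (f i) = n" using e_dim f_dim by auto
    show "complex_of_real (a i) * kron_vec (e i) (f i) $ (s*n+t) = complex_of_real (a i) * e i $ s * f i $ t"
      unfolding kron_vec_def d using idx_lt[OF st] st by simp
  qed
  finally show ?thesis .
qed

lemma lb_term:
  fixes a :: "nat \<Rightarrow> real"
  assumes a_nonneg: "\<forall>i<k. 0 \<le> a i" and a_decr: "\<forall>i j. i \<le> j \<and> j < k \<longrightarrow> a j \<le> a i"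
    and ij: "i < k" "j < k"
  shows "a i * a j - (if i = j then (a i)^2 else 0) \<le> a 0 * (if 2 \<le> k then a 1 else 0)"
proof (cases "i = j")
  case True
  have "0 \<le> a 0" using a_nonneg ij by auto
  moreover have "0 \<le> (if 2 \<le> k then a 1 else 0)" using a_nonneg by auto
  ultimately show ?thesis using True by (simp add: power2_eq_square)
next
  case False
  hence k2: "2 \<le> k" using ij by linarith
  have main: "a x * a y \<le> a 0 * a 1" if "x < y" "y < k" for x y
  proof -
    have "a x \<le> a 0" using a_decr that by auto
    moreover have "a y \<le> a 1" using a_decr that by auto
    moreover have "0 \<le> a x" "0 \<le> a y" "0 \<le> a 1" using a_nonneg that k2 by auto
    ultimately show ?thesis by (intro mult_mono) auto
  qed
  have "a i * a j \<le> a 0 * a 1"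
  proof (cases "i < j")
    case True thus ?thesis using main ij by auto
  next
    case False hence "j < i" using \<open>i \<noteq> j\<close> by simp
    thus ?thesis using main[of j i] ij by (simp add: mult.commute)
  qed
  thus ?thesis using False k2 by simp
qed

lemma lower_bound:
  fixes m n k :: nat and \<psi> :: "complex vec" and a :: "nat \<Rightarrow> real"
    and e f :: "nat \<Rightarrow> complex vec" and W :: "complex mat"
  assumes W: "ent_witness m n W" and trW: "mtrace W = 1" and m: "m > 0" and n: "n > 0"
    and e_dim: "\<forall>i<k. e i \<in> carrier_vec m"
    and f_dim: "\<forall>i<k. f i \<in> carrier_vec n"
    and e_on: "\<forall>i<k. \<forall>j<k. e i \<bullet>c e j = (if i = j then 1 else 0)"
    and f_on: "\<forall>i<k. \<forall>j<k. f i \<bullet>c f j = (if i = j then 1 else 0)"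
    and a_nonneg: "\<forall>i<k. 0 \<le> a i"
    and a_decr: "\<forall>i j. i \<le> j \<and> j < k \<longrightarrow> a j \<le> a i"
    and schmidt: "\<psi> = vec (m * n) (\<lambda>t. \<Sum>i<k. complex_of_real (a i) * kron_vec (e i) (f i) $ t)"
  shows "- (a 0 * (if 2 \<le> k then a 1 else 0)) \<le> Re (mtrace (W * proj \<psi>))"
proof -
  let ?lb = "a 0 * (if 2 \<le> k then a 1 else 0)"
  let ?H = "Hs m n (Wf W)"
  let ?N = "(2::nat)^(k+2)"
  define E where "E i s = e i $ s" for i s
  define F where "F i s = f i $ s" for i s
  define Psi where "Psi s t = (\<Sum>i<k. complex_of_real (a i) * E i s * F i t)" for s t
  define G where "G i j = ?H (\<lambda>s t s' t'. E i s' * cnj (E i s) * (F j t' * cnj (F j t)))" for i j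
  have Wc: "W \<in> carrier_mat (m*n) (m*n)" using W unfolding ent_witness_def hermitian_def by auto
  have psic: "\<psi> \<in> carrier_vec (m*n)" using schmidt by simp
  have onE: "(\<Sum>s<m. E l s * cnj (E l' s)) = (if l = l' then 1 else 0)" if "l < k" "l' < k" for l l'
    using e_on that e_dim cinner_sum[of "e l" m "e l'"] unfolding E_def by auto
  have onF: "(\<Sum>s<n. F l s * cnj (F l' s)) = (if l = l' then 1 else 0)" if "l < k" "l' < k" for l l'
    using f_on that f_dim cinner_sum[of "f l" n "f l'"] unfolding F_def by auto
  have tr: "mtrace (W * proj \<psi>) = ?H (\<lambda>s t s' t'. Psi s' t' * cnj (Psi s t))"
  proof -
    have pc: "proj \<psi> \<in> carrier_mat (m*n) (m*n)" using psic unfolding proj_def by auto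
    have "mtrace (W * proj \<psi>) = ?H (\<lambda>s t s' t'. proj \<psi> $$ (s'*n+t', s*n+t))"
      by (rule mtrace_mult[OF Wc pc])
    also have "\<dots> = ?H (\<lambda>s t s' t'. Psi s' t' * cnj (Psi s t))"
    proof (rule Hs_cong)
      fix s t s' t' assume i: "s < m" "t < n" "s' < m" "t' < n"
      show "proj \<psi> $$ (s'*n+t', s*n+t) = Psi s' t' * cnj (Psi s t)"
        unfolding proj_def Psi_def E_def F_def using psic idx_lt[OF i(1,2)] idx_lt[OF i(3,4)]
          psi_entry[OF e_dim f_dim schmidt i(1,2)] psi_entry[OF e_dim f_dim schmidt i(3,4)]
        by simp
    qed
    finally show ?thesis .
  qed
  define x where "x r s = (\<Sum>i<k. complex_of_real (sqrt (a i)) * om ?N (int r * 2^i) * E i s)" for r s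
  define y where "y r t = (\<Sum>i<k. complex_of_real (sqrt (a i)) * om ?N (- (int r * 2^i)) * F i t)" for r t
  have pos: "0 \<le> Re (\<Sum>r<?N. ?H (\<lambda>s t s' t'. x r s' * cnj (x r s) * (y r t' * cnj (y r t))))"
  proof -
    have "0 \<le> (\<Sum>r<?N. Re (?H (\<lambda>s t s' t'. x r s' * cnj (x r s) * (y r t' * cnj (y r t)))))"
      by (intro sum_nonneg EW_rank1[OF W])
    thus ?thesis by simp
  qed
  have "(\<Sum>r<?N. ?H (\<lambda>s t s' t'. x r s' * cnj (x r s) * (y r t' * cnj (y r t))))
      = ?H (\<lambda>s t s' t'. \<Sum>r<?N. x r s' * cnj (x r s) * (y r t' * cnj (y r t)))"
    by (rule Hs_sum[symmetric])
  also have "\<dots> = ?H (\<lambda>s t s' t'. of_nat ?N * ((Psi s' t' * cnj (Psi s t)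
       + (\<Sum>i<k. \<Sum>j<k. complex_of_real (a i * a j) * (E i s' * cnj (E i s) * (F j t' * cnj (F j t)))))
       - (\<Sum>i<k. complex_of_real ((a i)^2) * (E i s' * cnj (E i s) * (F i t' * cnj (F i t))))))"
    by (rule Hs_cong) (unfold x_def y_def Psi_def, rule twirl_pt[OF a_nonneg])
  also have "\<dots> = of_nat ?N * ((?H (\<lambda>s t s' t'. Psi s' t' * cnj (Psi s t))
       + (\<Sum>i<k. \<Sum>j<k. complex_of_real (a i * a j) * G i j))
       - (\<Sum>i<k. complex_of_real ((a i)^2) * G i i))"
    unfolding Hs_scale Hs_add Hs_diff Hs_sum G_def ..
  finally have NP: "0 \<le> real ?N * (Re (mtrace (W * proj \<psi>))
       + (\<Sum>i<k. \<Sum>j<k. a i * a j * Re (G i j)) - (\<Sum>i<k. (a i)^2 * Re (G i i)))"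
    using pos unfolding tr by simp
  have key: "0 \<le> Re (mtrace (W * proj \<psi>))
       + (\<Sum>i<k. \<Sum>j<k. a i * a j * Re (G i j)) - (\<Sum>i<k. (a i)^2 * Re (G i i))"
  proof (rule ccontr)
    assume "\<not> ?thesis"
    hence "Re (mtrace (W * proj \<psi>))
       + (\<Sum>i<k. \<Sum>j<k. a i * a j * Re (G i j)) - (\<Sum>i<k. (a i)^2 * Re (G i i)) < 0" by simp
    from mult_pos_neg[OF _ this, of "real ?N"] show False using NP by simp
  qed
  have Gnn: "0 \<le> Re (G i j)" for i j unfolding G_def by (rule EW_rank1[OF W])
  have "(\<Sum>i<k. \<Sum>j<k. a i * a j * Re (G i j)) - (\<Sum>i<k. (a i)^2 * Re (G i i))
      = (\<Sum>i<k. \<Sum>j<k. (a i * a j - (if i = j then (a i)^2 else 0)) * Re (G i j))"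
    by (simp add: left_diff_distrib sum_subtractf if_distrib[where f="\<lambda>z. z * _"] cong: if_cong)
  also have "\<dots> \<le> (\<Sum>i<k. \<Sum>j<k. ?lb * Re (G i j))"
    by (intro sum_mono mult_right_mono lb_term[OF a_nonneg a_decr] Gnn) auto
  also have "\<dots> \<le> ?lb"
  proof (cases "2 \<le> k")
    case True
    have "(\<Sum>i<k. \<Sum>j<k. Re (G i j)) \<le> Re (mtrace W)"
      unfolding G_def by (rule sum_G_le[OF W m n _ onE onF]) (use True in auto)
    hence "(\<Sum>i<k. \<Sum>j<k. Re (G i j)) \<le> 1" using trW by simp
    moreover have "?lb \<ge> 0" using a_nonneg True by auto
    ultimately have "?lb * (\<Sum>i<k. \<Sum>j<k. Re (G i j)) \<le> ?lb * 1" by (intro mult_left_mono)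
    thus ?thesis by (simp add: sum_distrib_left)
  next
    case False thus ?thesis by simp
  qed
  finally show ?thesis using key by linarith
qed

definition kf :: "complex vec \<Rightarrow> complex vec \<Rightarrow> nat \<Rightarrow> complex" where
  "kf x y p = kron_vec x y $ p"

lemma kf_entry:
  assumes "x \<in> carrier_vec m" "y \<in> carrier_vec n" "s < m" "t < n"
  shows "kf x y (s*n+t) = x $ s * y $ t"
  using assms idx_lt[of s m t n] unfolding kf_def kron_vec_def by auto

lemma Hs_rk:
  assumes "x \<in> carrier_vec m" "y \<in> carrier_vec n" "x' \<in> carrier_vec m" "y' \<in> carrier_vec n"
  shows "Hs m n (\<lambda>p q. kf x y p * cnj (kf x' y' q)) X =
    (\<Sum>s<m. \<Sum>t<n. \<Sum>s'<m. \<Sum>t'<n. x $ s * y $ t * cnj (x' $ s') * cnj (y' $ t') * X s t s' t')"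
  unfolding Hs_def using assms by (intro sum.cong refl) (simp add: kf_entry)

lemma sep4:
  fixes x y cx cy :: "nat \<Rightarrow> complex" and A B :: "nat \<Rightarrow> nat \<Rightarrow> complex"
  shows "(\<Sum>s<m. \<Sum>t<n. \<Sum>s'<m. \<Sum>t'<n. x s * y t * cx s' * cy t' * (A s' s * B t' t))
    = (\<Sum>s'<m. \<Sum>s<m. cx s' * A s' s * x s) * (\<Sum>t'<n. \<Sum>t<n. cy t' * B t' t * y t)"
proof -
  have "(\<Sum>s<m. \<Sum>t<n. \<Sum>s'<m. \<Sum>t'<n. x s * y t * cx s' * cy t' * (A s' s * B t' t))
      = (\<Sum>s<m. \<Sum>s'<m. \<Sum>t<n. \<Sum>t'<n. (cx s' * A s' s * x s) * (cy t' * B t' t * y t))"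
    by (rule sum.cong[OF refl], subst sum.swap, simp add: mult_ac)
  also have "\<dots> = (\<Sum>s'<m. \<Sum>s<m. \<Sum>t<n. \<Sum>t'<n. (cx s' * A s' s * x s) * (cy t' * B t' t * y t))"
    by (rule sum.swap)
  also have "\<dots> = (\<Sum>s'<m. \<Sum>s<m. (cx s' * A s' s * x s) * (\<Sum>t'<n. \<Sum>t<n. cy t' * B t' t * y t))"
    by (rule sum.cong[OF refl], rule sum.cong[OF refl], subst sum.swap, simp add: sum_distrib_left)
  also have "\<dots> = (\<Sum>s'<m. \<Sum>s<m. cx s' * A s' s * x s) * (\<Sum>t'<n. \<Sum>t<n. cy t' * B t' t * y t)"
    by (simp add: sum_distrib_right)
  finally show ?thesis .
qed

lemma sep2:
  fixes x y cx cy :: "nat \<Rightarrow> complex" and P :: "nat \<Rightarrow> nat \<Rightarrow> complex"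
  shows "(\<Sum>s<m. \<Sum>t<n. \<Sum>s'<m. \<Sum>t'<n. x s * y t * cx s' * cy t' * (P s' t' * cnj (P s t)))
    = (\<Sum>s<m. \<Sum>t<n. x s * y t * cnj (P s t)) * (\<Sum>s'<m. \<Sum>t'<n. cx s' * cy t' * P s' t')"
proof -
  have "(\<Sum>s<m. \<Sum>t<n. x s * y t * cnj (P s t)) * (\<Sum>s'<m. \<Sum>t'<n. cx s' * cy t' * P s' t')
     = (\<Sum>s<m. \<Sum>t<n. x s * y t * cnj (P s t) * (\<Sum>s'<m. \<Sum>t'<n. cx s' * cy t' * P s' t'))"
    by (simp only: sum_distrib_right)
  also have "\<dots> = (\<Sum>s<m. \<Sum>t<n. \<Sum>s'<m. \<Sum>t'<n. x s * y t * cnj (P s t) * (cx s' * cy t' * P s' t'))"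
    by (simp only: sum_distrib_left)
  finally show ?thesis by (simp add: mult_ac)
qed

lemma hf_cnj:
  assumes h: "\<And>i j. i < d \<Longrightarrow> j < d \<Longrightarrow> A $$ (j,i) = cnj (A $$ (i,j))"
  shows "cnj (hf d A x y) = hf d A y x"
proof -
  have "cnj (hf d A x y) = (\<Sum>i<d. \<Sum>j<d. x i * cnj (A $$ (i,j)) * cnj (y j))"
    unfolding hf_def by simp
  also have "\<dots> = (\<Sum>i<d. \<Sum>j<d. x i * A $$ (j,i) * cnj (y j))"
  proof (rule sum.cong[OF refl], rule sum.cong[OF refl])
    fix i j assume "i \<in> {..<d}" "j \<in> {..<d}"
    thus "x i * cnj (A $$ (i,j)) * cnj (y j) = x i * A $$ (j,i) * cnj (y j)" using h[of i j] by simp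
  qed
  also have "\<dots> = (\<Sum>j<d. \<Sum>i<d. x i * A $$ (j,i) * cnj (y j))" by (rule sum.swap)
  also have "\<dots> = hf d A y x" unfolding hf_def by (simp add: mult_ac)
  finally show ?thesis .
qed

lemma hf_expand:
  "hf d A (\<lambda>i. x i + c * y i) (\<lambda>i. x i + c * y i) =
     hf d A x x + c * hf d A x y + cnj c * hf d A y x + cnj c * c * hf d A y y"
  unfolding hf_def by (simp add: algebra_simps sum.distrib sum_distrib_left)

lemma quad_bound:
  fixes a b q :: real
  assumes h: "\<And>t. 0 \<le> a - 2 * t * q + t^2 * q * b" and q: "q \<ge> 0" and b: "b \<ge> 0"
  shows "q \<le> a * b"
proof (cases "b = 0")
  case True
  show ?thesis
  proof (rule ccontr)
    assume "\<not> q \<le> a * b" hence qp: "q > 0" using True by simp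
    have "0 \<le> a - 2 * ((a+1)/(2*q)) * q" using h[of "(a+1)/(2*q)"] True by simp
    also have "\<dots> = -1" using qp by (simp add: field_simps)
    finally show False by simp
  qed
next
  case False
  hence bp: "b > 0" using b by simp
  have "0 \<le> a - 2 * (1/b) * q + (1/b)^2 * q * b" by (rule h)
  also have "\<dots> = (a * b - q) / b" using bp by (simp add: field_simps power2_eq_square)
  finally show ?thesis using bp by (simp add: zero_le_divide_iff)
qed

lemma cauchy_schwarz_psd:
  assumes A: "psd d A"
  shows "(cmod (hf d A x y))^2 \<le> Re (hf d A x x) * Re (hf d A y y)"
proof -
  define z where "z = hf d A x y"
  have hyx: "hf d A y x = cnj z" unfolding z_def using hf_cnj[OF psdD(2)[OF A]] by metis
  have rx: "hf d A x x = complex_of_real (Re (hf d A x x))"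
    using hf_cnj[OF psdD(2)[OF A], where x=x and y=x] by (metis Reals_cnj_iff complex_is_Real_iff of_real_Re)
  have ry: "hf d A y y = complex_of_real (Re (hf d A y y))"
    using hf_cnj[OF psdD(2)[OF A], where x=y and y=y] by (metis Reals_cnj_iff complex_is_Real_iff of_real_Re)
  show ?thesis
  proof (rule quad_bound)
    fix t :: real
    define c where "c = - complex_of_real t * cnj z"
    have "0 \<le> Re (hf d A (\<lambda>i. x i + c * y i) (\<lambda>i. x i + c * y i))" by (rule psdD(3)[OF A])
    also have "hf d A (\<lambda>i. x i + c * y i) (\<lambda>i. x i + c * y i)
       = hf d A x x + c * z + cnj c * cnj z + cnj c * c * hf d A y y"
      unfolding hf_expand z_def[symmetric] hyx ..
    also have "Re \<dots> = Re (hf d A x x) - 2 * t * (cmod z)^2 + t^2 * (cmod z)^2 * Re (hf d A y y)"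
    proof -
      have zz: "cnj z * z = complex_of_real ((cmod z)^2)" using cnorm_sq[of z] by (simp add: mult.commute)
      have e1: "c * z = - complex_of_real (t * (cmod z)^2)" unfolding c_def using zz by (simp add: mult.assoc)
      have e2: "cnj c * cnj z = - complex_of_real (t * (cmod z)^2)" unfolding c_def using zz
        by (simp add: mult.assoc mult.commute)
      have e3: "cnj c * c = complex_of_real (t^2 * (cmod z)^2)" unfolding c_def using zz
        by (simp add: power2_eq_square mult_ac)
      show ?thesis unfolding e1 e2 e3 by (subst ry) (simp add: power2_eq_square)
    qed
    finally show "0 \<le> Re (hf d A x x) - 2 * t * (cmod (hf d A x y))^2 + t^2 * (cmod (hf d A x y))^2 * Re (hf d A y y)"
      unfolding z_def .
  next
    show "0 \<le> (cmod (hf d A x y))^2" by simp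
    show "0 \<le> Re (hf d A y y)" by (rule psdD(3)[OF A])
  qed
qed

lemma EW_from_prod:
  assumes herm: "hermitian (m*n) W"
    and pos: "\<And>A B. density_op m A \<Longrightarrow> density_op n B \<Longrightarrow> 0 \<le> Re (Hs m n (Wf W) (\<lambda>s t s' t'. A $$ (s',s) * B $$ (t',t)))"
  shows "ent_witness m n W"
  unfolding ent_witness_def
proof (intro conjI allI impI herm)
  fix \<sigma> assume "separable m n \<sigma>"
  then obtain K and p :: "nat \<Rightarrow> real" and \<sigma>A \<sigma>B where hyp: "\<forall>l<K. 0 \<le> p l \<and> density_op m (\<sigma>A l) \<and> density_op n (\<sigma>B l)"
    and sig: "\<sigma> = mat (m * n) (m * n)
              (\<lambda>(i, j). \<Sum>l<K. complex_of_real (p l) * kron_mat (\<sigma>A l) (\<sigma>B l) $$ (i, j))"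
    unfolding separable_def by auto
  have Wc: "W \<in> carrier_mat (m*n) (m*n)" using herm unfolding hermitian_def by auto
  have sc: "\<sigma> \<in> carrier_mat (m*n) (m*n)" using sig by simp
  have cA: "\<sigma>A l \<in> carrier_mat m m" and cB: "\<sigma>B l \<in> carrier_mat n n" if "l < K" for l
    using hyp that unfolding density_op_def psd_def hermitian_def by auto
  have "mtrace (W * \<sigma>) = Hs m n (Wf W) (\<lambda>s t s' t'. \<sigma> $$ (s'*n+t', s*n+t))"
    by (rule mtrace_mult[OF Wc sc])
  also have "\<dots> = Hs m n (Wf W) (\<lambda>s t s' t'. \<Sum>l<K. complex_of_real (p l) * (\<sigma>A l $$ (s',s) * \<sigma>B l $$ (t',t)))"
  proof (rule Hs_cong)
    fix s t s' t' assume i: "s < m" "t < n" "s' < m" "t' < n"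
    show "\<sigma> $$ (s'*n+t', s*n+t) = (\<Sum>l<K. complex_of_real (p l) * (\<sigma>A l $$ (s',s) * \<sigma>B l $$ (t',t)))"
      unfolding sig using idx_lt[OF i(1,2)] idx_lt[OF i(3,4)]
      by (simp add: kron_entry[OF cA cB i(1,3,2,4)])
  qed
  also have "\<dots> = (\<Sum>l<K. complex_of_real (p l) * Hs m n (Wf W) (\<lambda>s t s' t'. \<sigma>A l $$ (s',s) * \<sigma>B l $$ (t',t)))"
    unfolding Hs_sum Hs_scale ..
  finally have "Re (mtrace (W * \<sigma>)) = (\<Sum>l<K. p l * Re (Hs m n (Wf W) (\<lambda>s t s' t'. \<sigma>A l $$ (s',s) * \<sigma>B l $$ (t',t))))"
    by simp
  also have "\<dots> \<ge> 0" using hyp pos by (intro sum_nonneg mult_nonneg_nonneg) auto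
  finally show "0 \<le> Re (mtrace (W * \<sigma>))" .
qed

definition rk :: "complex vec \<Rightarrow> complex vec \<Rightarrow> complex vec \<Rightarrow> complex vec \<Rightarrow> nat \<Rightarrow> nat \<Rightarrow> complex" where
  "rk x y x' y' p q = kf x y p * cnj (kf x' y' q)"

definition W0m :: "nat \<Rightarrow> nat \<Rightarrow> complex vec \<Rightarrow> complex vec \<Rightarrow> complex vec \<Rightarrow> complex vec \<Rightarrow> complex mat" where
  "W0m m n x0 y0 x1 y1 = mat (m*n) (m*n) (\<lambda>(p,q).
     (rk x0 y1 x0 y1 p q + rk x1 y0 x1 y0 p q - rk x0 y0 x1 y1 p q - rk x1 y1 x0 y0 p q) / 2)"

definition W1m :: "nat \<Rightarrow> nat \<Rightarrow> complex vec \<Rightarrow> complex vec \<Rightarrow> complex mat" where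
  "W1m m n x y = mat (m*n) (m*n) (\<lambda>(p,q). rk x y x y p q)"

lemma Hs_wlin: "Hs m n (\<lambda>p q. (w1 p q + w2 p q - w3 p q - w4 p q) / 2) X
   = (Hs m n w1 X + Hs m n w2 X - Hs m n w3 X - Hs m n w4 X) / 2"
  unfolding Hs_def by (simp add: sum.distrib sum_subtractf sum_divide_distrib[symmetric] algebra_simps)

lemma Hs_W0:
  "Hs m n (Wf (W0m m n x0 y0 x1 y1)) X =
   (Hs m n (rk x0 y1 x0 y1) X + Hs m n (rk x1 y0 x1 y0) X - Hs m n (rk x0 y0 x1 y1) X - Hs m n (rk x1 y1 x0 y0) X) / 2"
proof -
  have "Hs m n (Wf (W0m m n x0 y0 x1 y1)) X = Hs m n (\<lambda>p q.
     (rk x0 y1 x0 y1 p q + rk x1 y0 x1 y0 p q - rk x0 y0 x1 y1 p q - rk x1 y1 x0 y0 p q) / 2) X"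
    by (rule Hs_wcong) (simp add: W0m_def)
  thus ?thesis by (simp only: Hs_wlin)
qed

lemma Hs_W1: "Hs m n (Wf (W1m m n x y)) X = Hs m n (rk x y x y) X"
  by (rule Hs_wcong) (simp add: W1m_def)

lemma Hs_rk_prod:
  assumes "x \<in> carrier_vec m" "y \<in> carrier_vec n" "x' \<in> carrier_vec m" "y' \<in> carrier_vec n"
  shows "Hs m n (rk x y x' y') (\<lambda>s t s' t'. A $$ (s',s) * B $$ (t',t))
     = hf m A (\<lambda>i. x' $ i) (\<lambda>i. x $ i) * hf n B (\<lambda>i. y' $ i) (\<lambda>i. y $ i)"
  unfolding rk_def Hs_rk[OF assms] sep4 hf_def ..

lemma Hs_rk_psi:
  assumes "x \<in> carrier_vec m" "y \<in> carrier_vec n" "x' \<in> carrier_vec m" "y' \<in> carrier_vec n"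
  shows "Hs m n (rk x y x' y') (\<lambda>s t s' t'. P s' t' * cnj (P s t))
     = cnj (\<Sum>s<m. \<Sum>t<n. cnj (x $ s) * cnj (y $ t) * P s t) * (\<Sum>s<m. \<Sum>t<n. cnj (x' $ s) * cnj (y' $ t) * P s t)"
  unfolding rk_def Hs_rk[OF assms] sep2 by simp

lemma tr_rk:
  assumes "x \<in> carrier_vec m" "y \<in> carrier_vec n" "x' \<in> carrier_vec m" "y' \<in> carrier_vec n"
  shows "(\<Sum>p<m*n. rk x y x' y' p p) = (x \<bullet>c x') * (y \<bullet>c y')"
proof -
  have "(\<Sum>p<m*n. rk x y x' y' p p) = (\<Sum>s<m. \<Sum>t<n. x $ s * cnj (x' $ s) * (y $ t * cnj (y' $ t)))"
    unfolding sum_split rk_def using assms by (intro sum.cong refl) (simp add: kf_entry mult_ac)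
  also have "\<dots> = (x \<bullet>c x') * (y \<bullet>c y')"
    using assms by (simp add: cinner_sum sum_product)
  finally show ?thesis .
qed

lemma herm_W0:
  "hermitian (m*n) (W0m m n x0 y0 x1 y1)"
proof (rule hermitianI)
  show "W0m m n x0 y0 x1 y1 \<in> carrier_mat (m*n) (m*n)" unfolding W0m_def by simp
  fix i j assume ij: "i < m*n" "j < m*n"
  show "W0m m n x0 y0 x1 y1 $$ (j,i) = cnj (W0m m n x0 y0 x1 y1 $$ (i,j))"
    using ij unfolding W0m_def rk_def by (simp add: mult.commute diff_diff_eq)
qed
lemma herm_W1:
  "hermitian (m*n) (W1m m n x y)"
proof (rule hermitianI)
  show "W1m m n x y \<in> carrier_mat (m*n) (m*n)" unfolding W1m_def by simp
  fix i j assume ij: "i < m*n" "j < m*n"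
  show "W1m m n x y $$ (j,i) = cnj (W1m m n x y $$ (i,j))"
    using ij unfolding W1m_def rk_def by (simp add: mult.commute)
qed

lemma final_ineq:
  fixes a0 a1 b0 b1 :: real and z1 z2 :: complex
  assumes "0 \<le> a0" "0 \<le> a1" "0 \<le> b0" "0 \<le> b1"
    and "(cmod z1)^2 \<le> a1 * a0" "(cmod z2)^2 \<le> b1 * b0"
  shows "2 * Re (z1 * z2) \<le> a0 * b1 + a1 * b0"
proof -
  have "Re (z1 * z2) \<le> cmod (z1 * z2)" by (rule complex_Re_le_cmod)
  also have "\<dots> = cmod z1 * cmod z2" by (simp add: norm_mult)
  finally have r: "Re (z1 * z2) \<le> cmod z1 * cmod z2" .
  have "(2 * (cmod z1 * cmod z2))^2 = 4 * ((cmod z1)^2 * (cmod z2)^2)" by (simp add: power2_eq_square)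
  also have "\<dots> \<le> 4 * ((a1 * a0) * (b1 * b0))"
  proof -
    have "(cmod z1)^2 * (cmod z2)^2 \<le> (a1 * a0) * (b1 * b0)"
      by (rule mult_mono[OF assms(5) assms(6)]) (use assms(1,2) in simp_all)
    thus ?thesis by simp
  qed
  also have "\<dots> \<le> (a0 * b1 + a1 * b0)^2"
  proof -
    have "(a0 * b1 + a1 * b0)^2 - 4 * ((a1 * a0) * (b1 * b0)) = (a0 * b1 - a1 * b0)^2"
      unfolding power2_eq_square by (simp add: algebra_simps)
    moreover have "0 \<le> (a0 * b1 - a1 * b0)^2" by simp
    ultimately show ?thesis by linarith
  qed
  finally have sq: "(2 * (cmod z1 * cmod z2))^2 \<le> (a0 * b1 + a1 * b0)^2" .
  have "0 \<le> a0 * b1 + a1 * b0" using assms by simp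
  hence "2 * (cmod z1 * cmod z2) \<le> a0 * b1 + a1 * b0" by (rule power2_le_imp_le[OF sq])
  thus ?thesis using r by linarith
qed

lemma hf_real:
  assumes A: "psd d A"
  shows "hf d A x x = complex_of_real (Re (hf d A x x))"
  using hf_cnj[OF psdD(2)[OF A], where x=x and y=x] by (metis Reals_cnj_iff complex_is_Real_iff of_real_Re)

lemma EW_W0:
  assumes x: "x0 \<in> carrier_vec m" "x1 \<in> carrier_vec m" and y: "y0 \<in> carrier_vec n" "y1 \<in> carrier_vec n"
  shows "ent_witness m n (W0m m n x0 y0 x1 y1)"
proof (rule EW_from_prod[OF herm_W0])
  fix A B assume dA: "density_op m A" and dB: "density_op n B"
  have A: "psd m A" and B: "psd n B" using dA dB unfolding density_op_def by auto
  define X0 where "X0 = (\<lambda>i. x0 $ i)" define X1 where "X1 = (\<lambda>i. x1 $ i)"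
  define Y0 where "Y0 = (\<lambda>i. y0 $ i)" define Y1 where "Y1 = (\<lambda>i. y1 $ i)"
  define z1 where "z1 = hf m A X1 X0" define z2 where "z2 = hf n B Y1 Y0"
  have c1: "hf m A X0 X1 = cnj z1" unfolding z1_def using hf_cnj[OF psdD(2)[OF A]] by metis
  have c2: "hf n B Y0 Y1 = cnj z2" unfolding z2_def using hf_cnj[OF psdD(2)[OF B]] by metis
  define a0 where "a0 = Re (hf m A X0 X0)"
  define a1 where "a1 = Re (hf m A X1 X1)"
  define b0 where "b0 = Re (hf n B Y0 Y0)"
  define b1 where "b1 = Re (hf n B Y1 Y1)"
  have ha0: "hf m A X0 X0 = complex_of_real a0" unfolding a0_def by (rule hf_real[OF A])
  have ha1: "hf m A X1 X1 = complex_of_real a1" unfolding a1_def by (rule hf_real[OF A])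
  have hb0: "hf n B Y0 Y0 = complex_of_real b0" unfolding b0_def by (rule hf_real[OF B])
  have hb1: "hf n B Y1 Y1 = complex_of_real b1" unfolding b1_def by (rule hf_real[OF B])
  have Heq: "Hs m n (Wf (W0m m n x0 y0 x1 y1)) (\<lambda>s t s' t'. A $$ (s',s) * B $$ (t',t))
     = (complex_of_real a0 * complex_of_real b1 + complex_of_real a1 * complex_of_real b0 - z1 * z2 - cnj z1 * cnj z2) / 2"
    unfolding Hs_W0 Hs_rk_prod[OF x(1) y(2) x(1) y(2)] Hs_rk_prod[OF x(2) y(1) x(2) y(1)]
      Hs_rk_prod[OF x(1) y(1) x(2) y(2)] Hs_rk_prod[OF x(2) y(2) x(1) y(1)]
    unfolding X0_def[symmetric] X1_def[symmetric] Y0_def[symmetric] Y1_def[symmetric]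
      z1_def[symmetric] z2_def[symmetric] c1 c2 ha0 ha1 hb0 hb1 ..
  have eq: "Re (Hs m n (Wf (W0m m n x0 y0 x1 y1)) (\<lambda>s t s' t'. A $$ (s',s) * B $$ (t',t)))
      = (a0 * b1 + a1 * b0 - 2 * Re (z1 * z2)) / 2"
    unfolding Heq by simp
  have "2 * Re (z1 * z2) \<le> a0 * b1 + a1 * b0"
    by (rule final_ineq) (use psdD(3)[OF A] psdD(3)[OF B] cauchy_schwarz_psd[OF A] cauchy_schwarz_psd[OF B]
        in \<open>auto simp: z1_def z2_def a0_def a1_def b0_def b1_def\<close>)
  thus "0 \<le> Re (Hs m n (Wf (W0m m n x0 y0 x1 y1)) (\<lambda>s t s' t'. A $$ (s',s) * B $$ (t',t)))"
    unfolding eq by simp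
qed

lemma EW_W1:
  assumes x: "x \<in> carrier_vec m" and y: "y \<in> carrier_vec n"
  shows "ent_witness m n (W1m m n x y)"
proof (rule EW_from_prod[OF herm_W1])
  fix A B assume dA: "density_op m A" and dB: "density_op n B"
  have A: "psd m A" and B: "psd n B" using dA dB unfolding density_op_def by auto
  have "Hs m n (Wf (W1m m n x y)) (\<lambda>s t s' t'. A $$ (s',s) * B $$ (t',t))
     = hf m A (\<lambda>i. x $ i) (\<lambda>i. x $ i) * hf n B (\<lambda>i. y $ i) (\<lambda>i. y $ i)"
    unfolding Hs_W1 Hs_rk_prod[OF x y x y] ..
  also have "\<dots> = complex_of_real (Re (hf m A (\<lambda>i. x $ i) (\<lambda>i. x $ i)) * Re (hf n B (\<lambda>i. y $ i) (\<lambda>i. y $ i)))"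
    by (subst hf_real[OF A], subst hf_real[OF B]) simp
  finally show "0 \<le> Re (Hs m n (Wf (W1m m n x y)) (\<lambda>s t s' t'. A $$ (s',s) * B $$ (t',t)))"
    using psdD(3)[OF A] psdD(3)[OF B] by simp
qed

lemma trace_W0:
  assumes x: "x0 \<in> carrier_vec m" "x1 \<in> carrier_vec m" and y: "y0 \<in> carrier_vec n" "y1 \<in> carrier_vec n"
  shows "mtrace (W0m m n x0 y0 x1 y1) =
    ((x0 \<bullet>c x0) * (y1 \<bullet>c y1) + (x1 \<bullet>c x1) * (y0 \<bullet>c y0) - (x0 \<bullet>c x1) * (y0 \<bullet>c y1) - (x1 \<bullet>c x0) * (y1 \<bullet>c y0)) / 2"
proof -
  have "mtrace (W0m m n x0 y0 x1 y1) = (\<Sum>p<m*n. (rk x0 y1 x0 y1 p p + rk x1 y0 x1 y0 p p - rk x0 y0 x1 y1 p p - rk x1 y1 x0 y0 p p) / 2)"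
    unfolding mtrace_def W0m_def by simp
  also have "\<dots> = ((\<Sum>p<m*n. rk x0 y1 x0 y1 p p) + (\<Sum>p<m*n. rk x1 y0 x1 y0 p p) - (\<Sum>p<m*n. rk x0 y0 x1 y1 p p) - (\<Sum>p<m*n. rk x1 y1 x0 y0 p p)) / 2"
    by (simp add: sum.distrib sum_subtractf sum_divide_distrib[symmetric])
  also have "\<dots> = ((x0 \<bullet>c x0) * (y1 \<bullet>c y1) + (x1 \<bullet>c x1) * (y0 \<bullet>c y0) - (x0 \<bullet>c x1) * (y0 \<bullet>c y1) - (x1 \<bullet>c x0) * (y1 \<bullet>c y0)) / 2"
    using x y by (simp add: tr_rk)
  finally show ?thesis .
qed

lemma trace_W1:
  assumes x: "x \<in> carrier_vec m" and y: "y \<in> carrier_vec n"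
  shows "mtrace (W1m m n x y) = (x \<bullet>c x) * (y \<bullet>c y)"
  unfolding mtrace_def W1m_def using tr_rk[OF x y x y] by simp

lemma trace_proj:
  fixes m n k :: nat and a :: "nat \<Rightarrow> real" and e f :: "nat \<Rightarrow> complex vec"
  assumes Wc: "W \<in> carrier_mat (m*n) (m*n)"
    and e_dim: "\<forall>i<k. e i \<in> carrier_vec m" and f_dim: "\<forall>i<k. f i \<in> carrier_vec n"
    and schmidt: "\<psi> = vec (m * n) (\<lambda>t. \<Sum>i<k. complex_of_real (a i) * kron_vec (e i) (f i) $ t)"
  shows "mtrace (W * proj \<psi>) = Hs m n (Wf W) (\<lambda>s t s' t'.
      (\<Sum>i<k. complex_of_real (a i) * e i $ s' * f i $ t') * cnj (\<Sum>i<k. complex_of_real (a i) * e i $ s * f i $ t))"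
proof -
  have psic: "\<psi> \<in> carrier_vec (m*n)" using schmidt by simp
  have pc: "proj \<psi> \<in> carrier_mat (m*n) (m*n)" using psic unfolding proj_def by auto
  have "mtrace (W * proj \<psi>) = Hs m n (Wf W) (\<lambda>s t s' t'. proj \<psi> $$ (s'*n+t', s*n+t))"
    by (rule mtrace_mult[OF Wc pc])
  also have "\<dots> = Hs m n (Wf W) (\<lambda>s t s' t'.
      (\<Sum>i<k. complex_of_real (a i) * e i $ s' * f i $ t') * cnj (\<Sum>i<k. complex_of_real (a i) * e i $ s * f i $ t))"
  proof (rule Hs_cong)
    fix s t s' t' assume i: "s < m" "t < n" "s' < m" "t' < n"
    show "proj \<psi> $$ (s'*n+t', s*n+t) = (\<Sum>i<k. complex_of_real (a i) * e i $ s' * f i $ t') * cnj (\<Sum>i<k. complex_of_real (a i) * e i $ s * f i $ t)"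
      unfolding proj_def using psic idx_lt[OF i(1,2)] idx_lt[OF i(3,4)]
        psi_entry[OF e_dim f_dim schmidt i(1,2)] psi_entry[OF e_dim f_dim schmidt i(3,4)]
      by simp
  qed
  finally show ?thesis .
qed

lemma ov_eval:
  fixes m n k :: nat and a :: "nat \<Rightarrow> real" and e f :: "nat \<Rightarrow> complex vec"
  assumes e_dim: "\<forall>i<k. e i \<in> carrier_vec m" and f_dim: "\<forall>i<k. f i \<in> carrier_vec n"
    and e_on: "\<forall>i<k. \<forall>j<k. e i \<bullet>c e j = (if i = j then 1 else 0)"
    and f_on: "\<forall>i<k. \<forall>j<k. f i \<bullet>c f j = (if i = j then 1 else 0)"
    and pq: "p < k" "q < k"
  shows "(\<Sum>s<m. \<Sum>t<n. cnj (e p $ s) * cnj (f q $ t) * (\<Sum>i<k. complex_of_real (a i) * e i $ s * f i $ t))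
     = (if p = q then complex_of_real (a p) else 0)"
proof -
  have "(\<Sum>s<m. \<Sum>t<n. cnj (e p $ s) * cnj (f q $ t) * (\<Sum>i<k. complex_of_real (a i) * e i $ s * f i $ t))
     = (\<Sum>s<m. \<Sum>t<n. \<Sum>i<k. complex_of_real (a i) * (e i $ s * cnj (e p $ s)) * (f i $ t * cnj (f q $ t)))"
    by (simp add: sum_distrib_left mult_ac)
  also have "\<dots> = (\<Sum>s<m. \<Sum>i<k. \<Sum>t<n. complex_of_real (a i) * (e i $ s * cnj (e p $ s)) * (f i $ t * cnj (f q $ t)))"
    by (rule sum.cong[OF refl], rule sum.swap)
  also have "\<dots> = (\<Sum>i<k. \<Sum>s<m. \<Sum>t<n. complex_of_real (a i) * (e i $ s * cnj (e p $ s)) * (f i $ t * cnj (f q $ t)))"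
    by (rule sum.swap)
  also have "\<dots> = (\<Sum>i<k. complex_of_real (a i) * (e i \<bullet>c e p) * (f i \<bullet>c f q))"
  proof (rule sum.cong[OF refl])
    fix i assume i: "i \<in> {..<k}"
    have "(\<Sum>s<m. \<Sum>t<n. complex_of_real (a i) * (e i $ s * cnj (e p $ s)) * (f i $ t * cnj (f q $ t)))
       = complex_of_real (a i) * (\<Sum>s<m. e i $ s * cnj (e p $ s)) * (\<Sum>t<n. f i $ t * cnj (f q $ t))"
      by (simp add: sum_distrib_left sum_distrib_right mult_ac)
    also have "\<dots> = complex_of_real (a i) * (e i \<bullet>c e p) * (f i \<bullet>c f q)"
    proof -
      have c: "e i \<in> carrier_vec m" "e p \<in> carrier_vec m" "f i \<in> carrier_vec n" "f q \<in> carrier_vec n"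
        using i pq e_dim f_dim by auto
      show ?thesis using cinner_sum[OF c(1,2)] cinner_sum[OF c(3,4)] by simp
    qed
    finally show "(\<Sum>s<m. \<Sum>t<n. complex_of_real (a i) * (e i $ s * cnj (e p $ s)) * (f i $ t * cnj (f q $ t)))
       = complex_of_real (a i) * (e i \<bullet>c e p) * (f i \<bullet>c f q)" .
  qed
  also have "\<dots> = (\<Sum>i<k. if i = p then (if p = q then complex_of_real (a p) else 0) else 0)"
    by (rule sum.cong[OF refl]) (use pq e_on f_on in auto)
  also have "\<dots> = (if p = q then complex_of_real (a p) else 0)" using pq by simp
  finally show ?thesis .
qed

lemma value_W0:
  fixes m n k :: nat and a :: "nat \<Rightarrow> real" and e f :: "nat \<Rightarrow> complex vec"
  assumes k2: "2 \<le> k"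
    and e_dim: "\<forall>i<k. e i \<in> carrier_vec m" and f_dim: "\<forall>i<k. f i \<in> carrier_vec n"
    and e_on: "\<forall>i<k. \<forall>j<k. e i \<bullet>c e j = (if i = j then 1 else 0)"
    and f_on: "\<forall>i<k. \<forall>j<k. f i \<bullet>c f j = (if i = j then 1 else 0)"
    and schmidt: "\<psi> = vec (m * n) (\<lambda>t. \<Sum>i<k. complex_of_real (a i) * kron_vec (e i) (f i) $ t)"
  shows "mtrace (W0m m n (e 0) (f 0) (e 1) (f 1) * proj \<psi>) = - complex_of_real (a 0 * a 1)"
proof -
  define P where "P s t = (\<Sum>i<k. complex_of_real (a i) * e i $ s * f i $ t)" for s t
  define ov where "ov x y = (\<Sum>s<m. \<Sum>t<n. cnj (x $ s) * cnj (y $ t) * P s t)" for x y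
  have x: "e 0 \<in> carrier_vec m" "e 1 \<in> carrier_vec m" and y: "f 0 \<in> carrier_vec n" "f 1 \<in> carrier_vec n"
    using e_dim f_dim k2 by auto
  have Wc: "W0m m n (e 0) (f 0) (e 1) (f 1) \<in> carrier_mat (m*n) (m*n)" unfolding W0m_def by simp
  have o: "ov (e p) (f q) = (if p = q then complex_of_real (a p) else 0)" if "p < k" "q < k" for p q
    unfolding ov_def P_def by (rule ov_eval[OF e_dim f_dim e_on f_on that])
  have o00: "ov (e 0) (f 0) = complex_of_real (a 0)" using o[of 0 0] k2 by simp
  have o11: "ov (e 1) (f 1) = complex_of_real (a 1)" using o[of 1 1] k2 by simp
  have o01: "ov (e 0) (f 1) = 0" using o[of 0 1] k2 by simp
  have o10: "ov (e 1) (f 0) = 0" using o[of 1 0] k2 by simp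
  have "mtrace (W0m m n (e 0) (f 0) (e 1) (f 1) * proj \<psi>)
     = Hs m n (Wf (W0m m n (e 0) (f 0) (e 1) (f 1))) (\<lambda>s t s' t'. P s' t' * cnj (P s t))"
    unfolding P_def by (rule trace_proj[OF Wc e_dim f_dim schmidt])
  also have "\<dots> = (cnj (ov (e 0) (f 1)) * ov (e 0) (f 1) + cnj (ov (e 1) (f 0)) * ov (e 1) (f 0)
      - cnj (ov (e 0) (f 0)) * ov (e 1) (f 1) - cnj (ov (e 1) (f 1)) * ov (e 0) (f 0)) / 2"
    unfolding Hs_W0 Hs_rk_psi[OF x(1) y(2) x(1) y(2)] Hs_rk_psi[OF x(2) y(1) x(2) y(1)]
      Hs_rk_psi[OF x(1) y(1) x(2) y(2)] Hs_rk_psi[OF x(2) y(2) x(1) y(1)] ov_def ..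
  also have "\<dots> = - complex_of_real (a 0 * a 1)" unfolding o00 o11 o01 o10 by simp
  finally show ?thesis .
qed

theorem proposition6:
  fixes m n k :: nat and \<psi> :: "complex vec" and a :: "nat \<Rightarrow> real"
    and e f :: "nat \<Rightarrow> complex vec"
  assumes psi_dim: "\<psi> \<in> carrier_vec (m * n)"
    and psi_unit: "\<psi> \<bullet>c \<psi> = 1"
    and e_dim: "\<forall>i<k. e i \<in> carrier_vec m"
    and f_dim: "\<forall>i<k. f i \<in> carrier_vec n"
    and e_on: "\<forall>i<k. \<forall>j<k. e i \<bullet>c e j = (if i = j then 1 else 0)"
    and f_on: "\<forall>i<k. \<forall>j<k. f i \<bullet>c f j = (if i = j then 1 else 0)"
    and a_nonneg: "\<forall>i<k. 0 \<le> a i"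
    and a_decr: "\<forall>i j. i \<le> j \<and> j < k \<longrightarrow> a j \<le> a i"
    and schmidt: "\<psi> = vec (m * n) (\<lambda>t. \<Sum>i<k. complex_of_real (a i) * kron_vec (e i) (f i) $ t)"
  shows "witnessed_ent m n (proj \<psi>) = a 0 * (if 2 \<le> k then a 1 else 0)"
proof -
  let ?lb = "a 0 * (if 2 \<le> k then a 1 else 0)"
  let ?S = "{W. normalized_EW m n W}"
  let ?g = "\<lambda>W. Re (mtrace (W * proj \<psi>))"
  have mn0: "m * n \<noteq> 0"
  proof
    assume "m * n = 0"
    hence "\<psi> \<bullet>c \<psi> = 0" using psi_dim by (simp add: scalar_prod_def)
    thus False using psi_unit by simp
  qed
  hence m: "m > 0" and n: "n > 0" by auto
  have k1: "k \<ge> 1"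
  proof (rule ccontr)
    assume "\<not> k \<ge> 1" hence "k = 0" by simp
    hence "\<psi> \<bullet>c \<psi> = 0" using schmidt by (simp add: scalar_prod_def)
    thus False using psi_unit by simp
  qed
  have e0: "e 0 \<in> carrier_vec m" and f0: "f 0 \<in> carrier_vec n" using e_dim f_dim k1 by auto
  have ee0: "e 0 \<bullet>c e 0 = 1" and ff0: "f 0 \<bullet>c f 0 = 1" using e_on f_on k1 by auto
  have W1S: "W1m m n (e 0) (f 0) \<in> ?S"
    using EW_W1[OF e0 f0] trace_W1[OF e0 f0] ee0 ff0 unfolding normalized_EW_def by simp
  hence Sne: "?S \<noteq> {}" by blast
  have lower: "- ?lb \<le> ?g W" if "W \<in> ?S" for W
  proof -
    have W: "ent_witness m n W" and tr: "mtrace W = 1" using that unfolding normalized_EW_def by auto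
    show ?thesis by (rule lower_bound[OF W tr m n e_dim f_dim e_on f_on a_nonneg a_decr schmidt])
  qed
  have bdd: "bdd_below (?g ` ?S)" by (rule bdd_belowI2[of _ "- ?lb"]) (rule lower)
  have ge: "- ?lb \<le> (INF W\<in>?S. ?g W)" by (rule cINF_greatest[OF Sne lower])
  show ?thesis
  proof (cases "2 \<le> k")
    case True
    have x: "e 0 \<in> carrier_vec m" "e 1 \<in> carrier_vec m" and y: "f 0 \<in> carrier_vec n" "f 1 \<in> carrier_vec n"
      using e_dim f_dim True by auto
    have on: "e 0 \<bullet>c e 0 = 1" "e 1 \<bullet>c e 1 = 1" "e 0 \<bullet>c e 1 = 0" "e 1 \<bullet>c e 0 = 0"
      "f 0 \<bullet>c f 0 = 1" "f 1 \<bullet>c f 1 = 1" "f 0 \<bullet>c f 1 = 0" "f 1 \<bullet>c f 0 = 0"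
      using e_on f_on True by auto
    have W0S: "W0m m n (e 0) (f 0) (e 1) (f 1) \<in> ?S"
      unfolding normalized_EW_def using EW_W0[OF x y] trace_W0[OF x y] on by simp
    have val: "?g (W0m m n (e 0) (f 0) (e 1) (f 1)) = - (a 0 * a 1)"
      using value_W0[OF True e_dim f_dim e_on f_on schmidt] by simp
    have le: "(INF W\<in>?S. ?g W) \<le> - ?lb"
      using cINF_lower[OF bdd W0S] val True by simp
    have inf: "(INF W\<in>?S. ?g W) = - ?lb" using le ge by linarith
    have "?lb \<ge> 0" using a_nonneg True by auto
    thus ?thesis unfolding witnessed_ent_def inf by simp
  next
    case False
    hence lb0: "?lb = 0" by simp
    have "0 \<le> (INF W\<in>?S. ?g W)" using ge lb0 by simp
    hence "max 0 (- (INF W\<in>?S. ?g W)) = 0" by simp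
    thus ?thesis unfolding witnessed_ent_def using lb0 by simp
  qed
qed

end
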